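(* Use the setting of the context, let $\rho>0$, and for $\star\in\{\rm d,i\}$ let $\Lambda^\star=\max_{\boldsymbol w\in\mathrm{range}(\boldsymbol I_T\otimes\boldsymbol\Pi^\star),\,\boldsymbol w\ne\boldsymbol 0}\boldsymbol w^{\mathsf H}\boldsymbol\Xi\boldsymbol w/\|\boldsymbol w\|^2$ (assuming $\boldsymbol\Pi^\star\neq\boldsymbol 0$). Then: (a) If $\Lambda^{\rm d}\ge\rho$, then $\boldsymbol U^{\mathsf H}\boldsymbol s_0^*\neq\boldsymbol 0$. (b) If $\Lambda^{\rm i}\ge\rho$, then $\boldsymbol U^{\mathsf H}\boldsymbol s_q^*\neq\boldsymbol 0$ for at least one $q\in\{1,\dots,Q\}$. (c) If $\mathrm{rank}(\boldsymbol U)=N_t$, $b_0>0$, $\boldsymbol g_0^{\mathsf H}\boldsymbol\Pi^{\rm d}\boldsymbol g_0>0$, and $$\lambda_{\min}(\boldsymbol U\boldsymbol U^{\mathsf H})\ge\frac{\rho\,\sigma_z^2/N_t}{b_0\,\boldsymbol g_0^{\mathsf H}\boldsymbol\Pi^{\rm d}\boldsymbol g_0},$$ then $\Lambda^{\rm d}\ge\rho$. (d) If $\mathrm{rank}(\boldsymbol U)=N_t$, $Q\ge1$, $\max_{1\le q\le Q}\sigma_q^2\boldsymbol g_q^{\mathsf H}\boldsymbol\Pi^{\rm i}\boldsymbol g_q>0$, and $$\lambda_{\min}(\boldsymbol U\boldsymbol U^{\mathsf H})\ge\frac{\rho\,\sigma_z^2/N_t}{\max_{1\le q\le Q}\sigma_q^2\,\boldsymbol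 g_q^{\mathsf H}\boldsymbol\Pi^{\rm i}\boldsymbol g_q},$$ then $\Lambda^{\rm i}\ge\rho$.
   Context: Let $T,N_t,N_m\ge1$, $Q\ge0$ be integers. Let $\boldsymbol g_0,\dots,\boldsymbol g_Q\in\mathbb{C}^{N_m}$ and $\boldsymbol s_0,\dots,\boldsymbol s_Q\in\mathbb{C}^{N_t}$ be steering vectors all of whose entries have unit magnitude (so $\|\boldsymbol s_q\|^2=N_t$). Let $\boldsymbol U\in\mathbb{C}^{N_t\times T}$ be the transmit code matrix and $\boldsymbol u=\mathrm{vec}(\boldsymbol U)$ (columns stacked). Let $\boldsymbol G_q=\boldsymbol I_T\otimes\boldsymbol g_q\boldsymbol s_q^{\mathsf T}$, let $b_0\ge0$ (direct-path power $|\beta_0|^2$), $\sigma_1^2,\dots,\sigma_Q^2>0$ (indirect-path powers), $\sigma_z^2>0$ (noise variance), and $\boldsymbol\Xi=\frac{b_0}{\sigma_z^2}\boldsymbol G_0\boldsymbol u\boldsymbol u^{\mathsf H}\boldsymbol G_0^{\mathsf H}+\sum_{q=1}^Q\frac{\sigma_q^2}{\sigma_z^2}\boldsymbol G_q\boldsymbol u\boldsymbol u^{\mathsf H}\boldsymbol G_q^{\mathsf H}$. $\boldsymbol\Pi^{\rm d}$ is the orthogonal projector onto the orthogonal complement of $\mathrm{span}\{\boldsymbol g_1,\dots,\boldsymbol g_Q\}$ (or $\boldsymbol I_{N_m}$ if $Q=0$); $\boldsymbol\Pi^{\rm i}$ is the orthogonal projector onto the orthogonal complement of $\mathrm{span}\{\boldsymbol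 g_0\}$ if $b_0>0$ (or $\boldsymbol I_{N_m}$ if $b_0=0$). $\Lambda^{\rm d}$ (resp. $\Lambda^{\rm i}$) is the maximal user SNR achievable with a receive filter zero-forcing the indirect paths (resp. the direct path); the condition $\Lambda^\star\ge\rho$ is the user's SNR/error-rate constraint. $\boldsymbol s^*$ is the entrywise complex conjugate, $\lambda_{\min}$ the smallest eigenvalue. *)

theory Defs
  imports Complex_Main "Jordan_Normal_Form.Schur_Decomposition" "Jordan_Normal_Form.DL_Rank"
    "Jordan_Normal_Form.Char_Poly"
begin

definition kron :: "complex mat \<Rightarrow> complex mat \<Rightarrow> complex mat" where
  "kron A B = mat (dim_row A * dim_row B) (dim_col A * dim_col B)
     (\<lambda>(i,j). A $$ (i div dim_row B, j div dim_col B) * B $$ (i mod dim_row B, j mod dim_col B))"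

definition vec_stack :: "complex mat \<Rightarrow> complex vec" where
  "vec_stack U = vec (dim_row U * dim_col U) (\<lambda>i. U $$ (i mod dim_row U, i div dim_row U))"

definition Gmat :: "nat \<Rightarrow> complex vec \<Rightarrow> complex vec \<Rightarrow> complex mat" where
  "Gmat T g s = kron (1\<^sub>m T) (mat (dim_vec g) (dim_vec s) (\<lambda>(i,j). g $ i * s $ j))"

definition outer :: "complex vec \<Rightarrow> complex mat" where
  "outer v = mat (dim_vec v) (dim_vec v) (\<lambda>(i,j). v $ i * cnj (v $ j))"

definition mat_range :: "complex mat \<Rightarrow> complex vec set" where
  "mat_range A = {A *\<^sub>v x | x. x \<in> carrier_vec (dim_col A)}"

definition orth_compl :: "nat \<Rightarrow> complex vec set \<Rightarrow> complex vec set" where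
  "orth_compl n S = {y \<in> carrier_vec n. \<forall>v\<in>S. y \<bullet>c v = 0}"

definition orth_proj :: "nat \<Rightarrow> complex vec set \<Rightarrow> complex mat" where
  "orth_proj n V = (THE P. P \<in> carrier_mat n n \<and> P * P = P \<and> mat_adjoint P = P \<and> mat_range P = V)"

definition quad :: "complex mat \<Rightarrow> complex vec \<Rightarrow> complex" where
  "quad A w = (A *\<^sub>v w) \<bullet>c w"

definition Pi_d :: "nat \<Rightarrow> nat \<Rightarrow> (nat \<Rightarrow> complex vec) \<Rightarrow> complex mat" where
  "Pi_d Nm Q g = orth_proj Nm (orth_compl Nm (g ` {1..Q}))"

definition Pi_i :: "nat \<Rightarrow> real \<Rightarrow> (nat \<Rightarrow> complex vec) \<Rightarrow> complex mat" where
  "Pi_i Nm b0 g = (if b0 > 0 then orth_proj Nm (orth_compl Nm {g 0}) else 1\<^sub>m Nm)"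

definition Xi :: "nat \<Rightarrow> nat \<Rightarrow> (nat \<Rightarrow> complex vec) \<Rightarrow> (nat \<Rightarrow> complex vec) \<Rightarrow> complex mat
    \<Rightarrow> real \<Rightarrow> (nat \<Rightarrow> real) \<Rightarrow> real \<Rightarrow> complex mat" where
  "Xi T Q g s U b0 sigma2 sigmaz2 =
     (let u = vec_stack U; n = T * dim_vec (g 0) in
      mat n n (\<lambda>ij. complex_of_real (b0 / sigmaz2) * outer (Gmat T (g 0) (s 0) *\<^sub>v u) $$ ij
        + (\<Sum>q\<in>{1..Q}. complex_of_real (sigma2 q / sigmaz2) * outer (Gmat T (g q) (s q) *\<^sub>v u) $$ ij)))"

definition Lambda :: "nat \<Rightarrow> complex mat \<Rightarrow> complex mat \<Rightarrow> real" where
  "Lambda T P X = Sup {Re (quad X w) / Re (w \<bullet>c w) | w.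
       w \<in> mat_range (kron (1\<^sub>m T) P) \<and> w \<noteq> 0\<^sub>v (T * dim_row P)}"

definition lambda_min :: "complex mat \<Rightarrow> real" where
  "lambda_min A = Min {Re k | k. eigenvalue A k}"

end

theory Submission
  imports Defs
begin


definition nsq :: "complex vec \<Rightarrow> real" where
  "nsq v = (\<Sum>i<dim_vec v. (cmod (v$i))\<^sup>2)"

lemma nsq_ge0: "nsq v \<ge> 0" unfolding nsq_def by (simp add: sum_nonneg)

lemma sprodc_sum: "dim_vec v = dim_vec w \<Longrightarrow> v \<bullet>c w = (\<Sum>i<dim_vec w. v$i * cnj (w$i))"
  unfolding scalar_prod_def by (simp add: atLeast0LessThan)

lemma sprodc_self: "v \<bullet>c v = of_real (nsq v)"
  unfolding nsq_def by (simp only: sprodc_sum[OF refl] of_real_sum complex_norm_square)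

lemma sprodc_swap: "dim_vec v = dim_vec w \<Longrightarrow> w \<bullet>c v = cnj (v \<bullet>c w)"
  by (simp add: sprodc_sum mult.commute)

lemma mv_sum: "i < dim_row A \<Longrightarrow> dim_vec x = dim_col A \<Longrightarrow>
   (A *\<^sub>v x) $ i = (\<Sum>j<dim_col A. A$$(i,j) * x$j)"
  by (simp add: scalar_prod_def row_def atLeast0LessThan)

lemma adj_dims[simp]: "dim_row (mat_adjoint A) = dim_col A" "dim_col (mat_adjoint A) = dim_row A"
  unfolding mat_adjoint_def by auto

lemma adj_index[simp]: "i < dim_col A \<Longrightarrow> j < dim_row A \<Longrightarrow> mat_adjoint A $$ (i,j) = cnj (A$$(j,i))"
  unfolding mat_adjoint_def by (simp add: mat_of_rows_def)

lemma herm_index: "P \<in> carrier_mat n n \<Longrightarrow> mat_adjoint P = P \<Longrightarrow> i < n \<Longrightarrow> j < n \<Longrightarrow>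
   P$$(i,j) = cnj (P$$(j,i))"
  by (metis adj_index carrier_matD(1) carrier_matD(2))

lemma herm_move: fixes P :: "complex mat" assumes P: "P \<in> carrier_mat n n" "mat_adjoint P = P"
  and x: "x \<in> carrier_vec n" and y: "y \<in> carrier_vec n"
  shows "(P *\<^sub>v x) \<bullet>c y = x \<bullet>c (P *\<^sub>v y)"
proof -
  have "(P *\<^sub>v x) \<bullet>c y = (\<Sum>i<n. (\<Sum>j<n. P$$(i,j) * x$j) * cnj (y$i))"
    using P x y by (simp add: sprodc_sum mv_sum del: index_mult_mat_vec)
  also have "\<dots> = (\<Sum>i<n. \<Sum>j<n. x$j * (P$$(i,j) * cnj (y$i)))"
    by (simp add: sum_distrib_left mult.commute mult.left_commute)
  also have "\<dots> = (\<Sum>j<n. \<Sum>i<n. x$j * (P$$(i,j) * cnj (y$i)))"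
    by (rule sum.swap)
  also have "\<dots> = (\<Sum>j<n. x$j * cnj (\<Sum>i<n. P$$(j,i) * y$i))"
    unfolding sum_distrib_left cnj_sum
    by (intro sum.cong refl) (simp add: herm_index[OF P, symmetric])
  also have "\<dots> = x \<bullet>c (P *\<^sub>v y)"
    using P x y by (simp add: sprodc_sum mv_sum del: index_mult_mat_vec)
  finally show ?thesis .
qed

lemma nsq_zero: "nsq v = 0 \<Longrightarrow> v = 0\<^sub>v (dim_vec v)"
proof -
  assume "nsq v = 0"
  hence "\<forall>i\<in>{..<dim_vec v}. (cmod (v$i))\<^sup>2 = 0" unfolding nsq_def
    by (subst sum_nonneg_eq_0_iff[symmetric]) auto
  thus ?thesis by (intro eq_vecI) auto
qed

definition is_proj :: "nat \<Rightarrow> complex mat \<Rightarrow> complex vec set \<Rightarrow> bool" where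
  "is_proj n P V \<longleftrightarrow> P \<in> carrier_mat n n \<and> P * P = P \<and> mat_adjoint P = P \<and> mat_range P = V"

lemma vec_eq_sprodc: fixes v w :: "complex vec"
  assumes "v \<in> carrier_vec n" "w \<in> carrier_vec n"
  "\<And>y. y \<in> carrier_vec n \<Longrightarrow> v \<bullet>c y = w \<bullet>c y" shows "v = w"
proof (rule eq_vecI)
  fix i assume i: "i < dim_vec w"
  hence i': "i < n" using assms by auto
  have "v \<bullet>c conjugate (unit_vec n i) = w \<bullet>c conjugate (unit_vec n i)"
    using assms(3)[of "conjugate (unit_vec n i)"] i' by simp
  then show "v $ i = w $ i" using i' by (simp add: scalar_prod_right_unit)
qed (use assms in auto)

lemma mv_unit: "(A::complex mat) \<in> carrier_mat n m \<Longrightarrow> i < n \<Longrightarrow> j < m \<Longrightarrow> (A *\<^sub>v unit_vec m j) $ i = A $$ (i,j)"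
  using scalar_prod_right_unit[of j m "row A i"] by simp

lemma mat_eq_by_vec: fixes A B :: "complex mat"
  assumes "A \<in> carrier_mat n m" "B \<in> carrier_mat n m"
  "\<And>x. x \<in> carrier_vec m \<Longrightarrow> A *\<^sub>v x = B *\<^sub>v x" shows "A = B"
proof (rule eq_matI)
  fix i j assume ij: "i < dim_row B" "j < dim_col B"
  hence "(A *\<^sub>v unit_vec m j) $ i = (B *\<^sub>v unit_vec m j) $ i" using assms(3)[of "unit_vec m j"] assms(2) by auto
  then show "A $$ (i,j) = B $$ (i,j)" using ij assms mv_unit[of A n m i j] mv_unit[of B n m i j] by simp
qed (use assms in auto)

lemma proj_fix: assumes "is_proj n P V" "y \<in> V" shows "P *\<^sub>v y = y"
proof -
  from assms obtain x where x: "x \<in> carrier_vec n" "y = P *\<^sub>v x"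
    unfolding is_proj_def mat_range_def by auto
  have P: "P \<in> carrier_mat n n" "P * P = P" using assms unfolding is_proj_def by auto
  have "(P * P) *\<^sub>v x = P *\<^sub>v (P *\<^sub>v x)" using P x by (intro assoc_mult_mat_vec) auto
  thus ?thesis using x P by simp
qed

lemma proj_in: assumes "is_proj n P V" "x \<in> carrier_vec n" shows "P *\<^sub>v x \<in> V"
  using assms unfolding is_proj_def mat_range_def by auto

lemma proj_carrier: assumes "is_proj n P V" "y \<in> V" shows "y \<in> carrier_vec n"
  using assms unfolding is_proj_def mat_range_def by auto

lemma proj_unique: assumes P: "is_proj n P V" and P': "is_proj n P' V" shows "P = P'"
proof -
  have Pc: "P \<in> carrier_mat n n" "mat_adjoint P = P" and P'c: "P' \<in> carrier_mat n n" "mat_adjoint P' = P'"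
    using P P' unfolding is_proj_def by auto
  show ?thesis
  proof (rule mat_eq_by_vec[OF Pc(1) P'c(1)])
    fix x :: "complex vec" assume x: "x \<in> carrier_vec n"
    show "P *\<^sub>v x = P' *\<^sub>v x"
    proof (rule vec_eq_sprodc[of _ n])
      fix y :: "complex vec" assume y: "y \<in> carrier_vec n"
      have "(P *\<^sub>v x) \<bullet>c y = (P' *\<^sub>v (P *\<^sub>v x)) \<bullet>c y"
        using proj_fix[OF P' proj_in[OF P x]] by simp
      also have "\<dots> = (P *\<^sub>v x) \<bullet>c (P' *\<^sub>v y)"
        using herm_move[OF P'c _ y, of "P *\<^sub>v x"] Pc x by simp
      also have "\<dots> = x \<bullet>c (P *\<^sub>v (P' *\<^sub>v y))"
        using herm_move[OF Pc x, of "P' *\<^sub>v y"] P'c y by simp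
      also have "\<dots> = x \<bullet>c (P' *\<^sub>v y)"
        using proj_fix[OF P proj_in[OF P' y]] by simp
      also have "\<dots> = (P' *\<^sub>v x) \<bullet>c y"
        using herm_move[OF P'c x y] by simp
      finally show "(P *\<^sub>v x) \<bullet>c y = (P' *\<^sub>v x) \<bullet>c y" .
    qed (use x Pc P'c in auto)
  qed
qed

lemma orth_compl_insert: "orth_compl n (insert v S) = {y \<in> orth_compl n S. y \<bullet>c v = 0}"
  unfolding orth_compl_def by auto

lemma proj_exists: "set vs \<subseteq> carrier_vec n \<Longrightarrow> \<exists>P. is_proj n P (orth_compl n (set vs))"
proof (induction vs)
  case Nil
  have "is_proj n (1\<^sub>m n) (carrier_vec n)"
    unfolding is_proj_def mat_range_def
    by (auto intro!: eq_matI) (metis one_carrier_mat one_mult_mat_vec)+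
  moreover have "orth_compl n (set []) = carrier_vec n" unfolding orth_compl_def by auto
  ultimately show ?case by auto
next
  case (Cons v vs)
  then obtain P where P: "is_proj n P (orth_compl n (set vs))" and v: "v \<in> carrier_vec n" by auto
  define V where "V = orth_compl n (set vs)"
  have Pc: "P \<in> carrier_mat n n" "P * P = P" "mat_adjoint P = P" "mat_range P = V"
    using P unfolding is_proj_def V_def by auto
  define r where "r = P *\<^sub>v v"
  have r: "r \<in> carrier_vec n" "r \<in> V" using Pc v proj_in[OF P v] unfolding r_def V_def by auto
  have Pr: "P *\<^sub>v r = r" using proj_fix[OF P] r unfolding V_def by auto
  have yv: "y \<bullet>c v = y \<bullet>c r" if "y \<in> V" for y
  proof -
    have y: "y \<in> carrier_vec n" using proj_carrier[OF P] that unfolding V_def by auto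
    have "y \<bullet>c v = (P *\<^sub>v y) \<bullet>c v" using proj_fix[OF P] that unfolding V_def by auto
    also have "\<dots> = y \<bullet>c r" unfolding r_def using herm_move[OF Pc(1,3) y v] .
    finally show ?thesis .
  qed
  have V': "orth_compl n (set (v # vs)) = {y \<in> V. y \<bullet>c r = 0}"
    using yv unfolding V_def by (auto simp: orth_compl_insert)
  show ?case
  proof (cases "r = 0\<^sub>v n")
    case True
    have "orth_compl n (set (v # vs)) = V" unfolding V' True using proj_carrier[OF P]
      unfolding V_def by auto
    thus ?thesis using P unfolding V_def by auto
  next
    case False
    have nr: "nsq r > 0" using nsq_zero[of r] nsq_ge0[of r] False r by force
    define c where "c = complex_of_real (1 / nsq r)"
    define P' where "P' = P - c \<cdot>\<^sub>m outer r"
    have outc: "outer r \<in> carrier_mat n n" using r unfolding outer_def by auto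
    have P'c: "P' \<in> carrier_mat n n" unfolding P'_def using Pc outc by auto
    have P'idx: "P' $$ (i,j) = P $$ (i,j) - c * (r$i * cnj (r$j))" if "i < n" "j < n" for i j
      unfolding P'_def outer_def using that Pc r by auto
    have M2: "P' *\<^sub>v x = P *\<^sub>v x - (c * (x \<bullet>c r)) \<cdot>\<^sub>v r" if x: "x \<in> carrier_vec n" for x
    proof (rule eq_vecI)
      fix i assume "i < dim_vec (P *\<^sub>v x - (c * (x \<bullet>c r)) \<cdot>\<^sub>v r)"
      hence i: "i < n" using r by auto
      have "(P' *\<^sub>v x) $ i = (\<Sum>j<n. (P $$ (i,j) - c * (r$i * cnj (r$j))) * x$j)"
        using P'c x i P'idx by (simp add: mv_sum del: index_mult_mat_vec)
      also have "\<dots> = (\<Sum>j<n. P $$ (i,j) * x$j) - c * (\<Sum>j<n. x$j * cnj (r$j)) * r$i"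
        by (simp add: algebra_simps sum_subtractf sum_distrib_left sum_distrib_right)
      also have "\<dots> = (P *\<^sub>v x - (c * (x \<bullet>c r)) \<cdot>\<^sub>v r) $ i"
        using Pc x r i by (simp add: mv_sum sprodc_sum del: index_mult_mat_vec)
      finally show "(P' *\<^sub>v x) $ i = (P *\<^sub>v x - (c * (x \<bullet>c r)) \<cdot>\<^sub>v r) $ i" .
    qed (use P'c r in auto)
    have cr: "c * (r \<bullet>c r) = 1" unfolding c_def sprodc_self using nr
      by (simp add: field_simps flip: of_real_mult)
    have P'r: "P' *\<^sub>v r = 0\<^sub>v n"
      using M2[OF r(1)] Pr cr r by auto
    have adj: "mat_adjoint P' = P'"
    proof (rule eq_matI)
      fix i j assume ij: "i < dim_row P'" "j < dim_col P'"
      hence ij': "i < n" "j < n" using P'c by auto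
      have "mat_adjoint P' $$ (i,j) = cnj (P' $$ (j,i))" using ij' P'c by simp
      also have "\<dots> = P' $$ (i,j)" unfolding P'idx[OF ij'(2,1)] P'idx[OF ij']
        using herm_index[OF Pc(1,3) ij'] by (simp add: c_def)
      finally show "mat_adjoint P' $$ (i,j) = P' $$ (i,j)" .
    qed (use P'c in auto)
    have fixz: "P' *\<^sub>v z = z" if "z \<in> V" "z \<bullet>c r = 0" for z
    proof -
      have z: "z \<in> carrier_vec n" using proj_carrier[OF P] that unfolding V_def by auto
      have "P' *\<^sub>v z = z - 0 \<cdot>\<^sub>v r" using M2[OF z] that proj_fix[OF P] z unfolding V_def by auto
      also have "\<dots> = z" by (intro eq_vecI) (use z r in auto)
      finally show ?thesis .
    qed
    have img: "P' *\<^sub>v x \<in> V \<and> (P' *\<^sub>v x) \<bullet>c r = 0" if x: "x \<in> carrier_vec n" for x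
    proof
      define a where "a = c * (x \<bullet>c r)"
      have "P' *\<^sub>v x = P *\<^sub>v x - a \<cdot>\<^sub>v (P *\<^sub>v v)" using M2[OF x] unfolding a_def r_def .
      also have "\<dots> = P *\<^sub>v (x - a \<cdot>\<^sub>v v)" using Pc x v
        by (simp add: mult_minus_distrib_mat_vec mult_mat_vec)
      finally have e: "P' *\<^sub>v x = P *\<^sub>v (x - a \<cdot>\<^sub>v v)" .
      have "x - a \<cdot>\<^sub>v v \<in> carrier_vec n" using x v by simp
      thus "P' *\<^sub>v x \<in> V" unfolding e using proj_in[OF P] unfolding V_def by blast
      have "(P' *\<^sub>v x) \<bullet>c r = x \<bullet>c (P' *\<^sub>v r)" using herm_move[OF P'c adj x r(1)] .
      thus "(P' *\<^sub>v x) \<bullet>c r = 0" unfolding P'r using x by simp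
    qed
    have "is_proj n P' (orth_compl n (set (v # vs)))"
      unfolding is_proj_def V'
    proof (intro conjI)
      show "P' * P' = P'"
      proof (rule mat_eq_by_vec[of _ n n])
        fix x :: "complex vec" assume x: "x \<in> carrier_vec n"
        have "(P' * P') *\<^sub>v x = P' *\<^sub>v (P' *\<^sub>v x)" by (rule assoc_mult_mat_vec[OF P'c P'c x])
        also have "\<dots> = P' *\<^sub>v x" using fixz img[OF x] by auto
        finally show "(P' * P') *\<^sub>v x = P' *\<^sub>v x" .
      qed (use P'c in auto)
      show "mat_range P' = {y \<in> V. y \<bullet>c r = 0}"
      proof
        show "mat_range P' \<subseteq> {y \<in> V. y \<bullet>c r = 0}"
        proof
          fix y assume "y \<in> mat_range P'"
          then obtain x where "x \<in> carrier_vec n" "y = P' *\<^sub>v x" using P'c unfolding mat_range_def by auto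
          thus "y \<in> {y \<in> V. y \<bullet>c r = 0}" using img by blast
        qed
        show "{y \<in> V. y \<bullet>c r = 0} \<subseteq> mat_range P'"
        proof
          fix y assume y: "y \<in> {y \<in> V. y \<bullet>c r = 0}"
          hence "y = P' *\<^sub>v y" using fixz by auto
          moreover have "y \<in> carrier_vec n" using proj_carrier[OF P] y unfolding V_def by auto
          ultimately show "y \<in> mat_range P'" using P'c unfolding mat_range_def by force
        qed
      qed
    qed (use P'c adj in blast)+
    thus ?thesis by blast
  qed
qed

lemma orth_proj_is_proj: assumes "finite S" "S \<subseteq> carrier_vec n"
  shows "is_proj n (orth_proj n (orth_compl n S)) (orth_compl n S)"
proof -
  obtain vs where vs: "set vs = S" using assms(1) finite_list by auto
  obtain P where P: "is_proj n P (orth_compl n S)" using proj_exists[of vs n] vs assms by auto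
  have e: "orth_proj n (orth_compl n S) = (THE P. is_proj n P (orth_compl n S))"
    unfolding orth_proj_def is_proj_def by simp
  show ?thesis unfolding e
    by (rule theI[of "\<lambda>P. is_proj n P (orth_compl n S)", OF P])
       (erule proj_unique[OF _ P])
qed



lemma discr: fixes a b c :: real assumes b: "b \<ge> 0" and h: "\<And>t. 0 \<le> a + 2*t*c + t\<^sup>2*b"
  shows "c\<^sup>2 \<le> a*b"
proof (cases "b = 0")
  case True
  show ?thesis
  proof (cases "c = 0")
    case True thus ?thesis using h[of 0] \<open>b = 0\<close> by simp
  next
    case False
    have "0 \<le> a + 2*(-(a+1)/(2*c))*c" using h[of "-(a+1)/(2*c)"] \<open>b=0\<close> by simp
    also have "\<dots> = -1" using False by (simp add: field_simps)
    finally show ?thesis by simp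
  qed
next
  case False
  hence bp: "b > 0" using b by simp
  have "0 \<le> a + 2*(-c/b)*c + (-c/b)\<^sup>2*b" by (rule h)
  also have "\<dots> = a - c\<^sup>2/b" using bp by (simp add: field_simps power2_eq_square)
  finally have "c\<^sup>2/b \<le> a" by simp
  thus ?thesis using bp by (simp add: field_simps mult.commute)
qed

lemma cs_real: fixes a b :: "nat \<Rightarrow> real"
  shows "(\<Sum>i\<in>I. a i * b i)\<^sup>2 \<le> (\<Sum>i\<in>I. (a i)\<^sup>2) * (\<Sum>i\<in>I. (b i)\<^sup>2)"
proof -
  have "(\<Sum>i\<in>I. a i * b i)\<^sup>2 \<le> (\<Sum>i\<in>I. (b i)\<^sup>2) * (\<Sum>i\<in>I. (a i)\<^sup>2)"
  proof (rule discr)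
    show "0 \<le> (\<Sum>i\<in>I. (a i)\<^sup>2)" by (simp add: sum_nonneg)
    fix t :: real
    have "0 \<le> (\<Sum>i\<in>I. (t * a i + b i)\<^sup>2)" by (simp add: sum_nonneg)
    also have "\<dots> = (\<Sum>i\<in>I. (b i)\<^sup>2) + 2*t*(\<Sum>i\<in>I. a i * b i) + t\<^sup>2 * (\<Sum>i\<in>I. (a i)\<^sup>2)"
      by (simp add: power2_eq_square algebra_simps sum.distrib sum_distrib_left)
    finally show "0 \<le> (\<Sum>i\<in>I. (b i)\<^sup>2) + 2*t*(\<Sum>i\<in>I. a i * b i) + t\<^sup>2 * (\<Sum>i\<in>I. (a i)\<^sup>2)" .
  qed
  thus ?thesis by (simp add: mult.commute)
qed

lemma cs_cmod: fixes a b :: "nat \<Rightarrow> complex"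
  shows "(cmod (\<Sum>i\<in>I. a i * b i))\<^sup>2 \<le> (\<Sum>i\<in>I. (cmod (a i))\<^sup>2) * (\<Sum>i\<in>I. (cmod (b i))\<^sup>2)"
proof -
  have "cmod (\<Sum>i\<in>I. a i * b i) \<le> (\<Sum>i\<in>I. cmod (a i) * cmod (b i))"
    using norm_sum[of "\<lambda>i. a i * b i" I] by (simp add: norm_mult)
  hence "(cmod (\<Sum>i\<in>I. a i * b i))\<^sup>2 \<le> (\<Sum>i\<in>I. cmod (a i) * cmod (b i))\<^sup>2"
    by (rule power_mono) simp
  also have "\<dots> \<le> (\<Sum>i\<in>I. (cmod (a i))\<^sup>2) * (\<Sum>i\<in>I. (cmod (b i))\<^sup>2)"
    by (rule cs_real)
  finally show ?thesis .
qed

lemma cs_vec: "dim_vec v = dim_vec w \<Longrightarrow> (cmod (v \<bullet>c w))\<^sup>2 \<le> nsq v * nsq w"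
  unfolding nsq_def using cs_cmod[of "\<lambda>i. v$i" "\<lambda>i. cnj (w$i)" "{..<dim_vec w}"]
  by (simp add: sprodc_sum)

definition frob :: "complex mat \<Rightarrow> real" where
  "frob A = (\<Sum>i<dim_row A. \<Sum>j<dim_col A. (cmod (A$$(i,j)))\<^sup>2)"

lemma frob_bound: assumes "dim_vec x = dim_col A" shows "nsq (A *\<^sub>v x) \<le> frob A * nsq x"
proof -
  have "nsq (A *\<^sub>v x) = (\<Sum>i<dim_row A. (cmod (\<Sum>j<dim_col A. A$$(i,j) * x$j))\<^sup>2)"
    unfolding nsq_def using assms by (simp add: mv_sum del: index_mult_mat_vec)
  also have "\<dots> \<le> (\<Sum>i<dim_row A. (\<Sum>j<dim_col A. (cmod (A$$(i,j)))\<^sup>2) * nsq x)"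
  proof (rule sum_mono)
    fix i show "(cmod (\<Sum>j<dim_col A. A$$(i,j) * x$j))\<^sup>2 \<le> (\<Sum>j<dim_col A. (cmod (A$$(i,j)))\<^sup>2) * nsq x"
      using cs_cmod[of "\<lambda>j. A$$(i,j)" "\<lambda>j. x$j" "{..<dim_col A}"] assms unfolding nsq_def by simp
  qed
  also have "\<dots> = frob A * nsq x" unfolding frob_def by (simp add: sum_distrib_right)
  finally show ?thesis .
qed

lemma frob_ge0: "frob A \<ge> 0" unfolding frob_def by (simp add: sum_nonneg)



lemma adj_carrier[simp]: "U \<in> carrier_mat n m \<Longrightarrow> mat_adjoint U \<in> carrier_mat m n"
  by (metis adj_dims carrier_matD carrier_matI)

lemma adj_move: fixes U :: "complex mat" assumes U: "U \<in> carrier_mat n m"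
  and x: "x \<in> carrier_vec m" and y: "y \<in> carrier_vec n"
  shows "(U *\<^sub>v x) \<bullet>c y = x \<bullet>c (mat_adjoint U *\<^sub>v y)"
proof -
  have "(U *\<^sub>v x) \<bullet>c y = (\<Sum>i<n. (\<Sum>j<m. U$$(i,j) * x$j) * cnj (y$i))"
    using U x y by (simp add: sprodc_sum mv_sum del: index_mult_mat_vec)
  also have "\<dots> = (\<Sum>i<n. \<Sum>j<m. x$j * (U$$(i,j) * cnj (y$i)))"
    by (simp add: sum_distrib_left mult.commute mult.left_commute)
  also have "\<dots> = (\<Sum>j<m. \<Sum>i<n. x$j * (U$$(i,j) * cnj (y$i)))"
    by (rule sum.swap)
  also have "\<dots> = (\<Sum>j<m. x$j * cnj (\<Sum>i<n. cnj (U$$(i,j)) * y$i))"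
    unfolding sum_distrib_left cnj_sum by (intro sum.cong refl) simp
  also have "\<dots> = x \<bullet>c (mat_adjoint U *\<^sub>v y)"
    using U x y by (simp add: sprodc_sum mv_sum del: index_mult_mat_vec)
  finally show ?thesis .
qed

lemma gram_props: fixes U :: "complex mat" assumes U: "U \<in> carrier_mat n m"
  shows "U * mat_adjoint U \<in> carrier_mat n n" "mat_adjoint (U * mat_adjoint U) = U * mat_adjoint U"
    "\<And>y. y \<in> carrier_vec n \<Longrightarrow> quad (U * mat_adjoint U) y = of_real (nsq (mat_adjoint U *\<^sub>v y))"
proof -
  show c: "U * mat_adjoint U \<in> carrier_mat n n" using U by auto
  show "mat_adjoint (U * mat_adjoint U) = U * mat_adjoint U"
  proof (rule eq_matI)
    fix i j assume ij: "i < dim_row (U * mat_adjoint U)" "j < dim_col (U * mat_adjoint U)"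
    hence ij': "i < n" "j < n" using c by auto
    have g: "(U * mat_adjoint U) $$ (a,b) = (\<Sum>k<m. U$$(a,k) * cnj (U$$(b,k)))" if "a < n" "b < n" for a b
      using that U by (simp add: scalar_prod_def atLeast0LessThan)
    have "mat_adjoint (U * mat_adjoint U) $$ (i, j) = cnj ((U * mat_adjoint U) $$ (j, i))"
      by (rule adj_index) (use ij' c in auto)
    also have "\<dots> = (U * mat_adjoint U) $$ (i, j)" unfolding g[OF ij'] g[OF ij'(2,1)] cnj_sum
      by (intro sum.cong refl) simp
    finally show "mat_adjoint (U * mat_adjoint U) $$ (i, j) = (U * mat_adjoint U) $$ (i, j)" .
  qed (use c in auto)
  fix y :: "complex vec" assume y: "y \<in> carrier_vec n"
  have "quad (U * mat_adjoint U) y = (U *\<^sub>v (mat_adjoint U *\<^sub>v y)) \<bullet>c y"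
    unfolding quad_def using U y by (subst assoc_mult_mat_vec[of _ n m _ n]) auto
  also have "\<dots> = (mat_adjoint U *\<^sub>v y) \<bullet>c (mat_adjoint U *\<^sub>v y)"
    by (rule adj_move[OF U mult_mat_vec_carrier[OF adj_carrier[OF U] y] y])
  finally show "quad (U * mat_adjoint U) y = of_real (nsq (mat_adjoint U *\<^sub>v y))"
    by (simp add: sprodc_self)
qed



lemma bil_sum: fixes H :: "complex mat" assumes "H \<in> carrier_mat n n" "u \<in> carrier_vec n" "w \<in> carrier_vec n"
  shows "(H *\<^sub>v u) \<bullet>c w = (\<Sum>i<n. \<Sum>j<n. H$$(i,j) * u$j * cnj (w$i))"
proof -
  have "(H *\<^sub>v u) \<bullet>c w = (\<Sum>i<n. (\<Sum>j<n. H$$(i,j) * u$j) * cnj (w$i))"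
    using assms by (simp add: sprodc_sum mv_sum del: index_mult_mat_vec)
  also have "\<dots> = (\<Sum>i<n. \<Sum>j<n. H$$(i,j) * u$j * cnj (w$i))"
    by (simp only: sum_distrib_right)
  finally show ?thesis .
qed

lemma quad_expand: fixes H :: "complex mat" assumes H: "H \<in> carrier_mat n n" "mat_adjoint H = H"
  and x: "x \<in> carrier_vec n" and y: "y \<in> carrier_vec n"
  shows "Re (quad H (x + complex_of_real t \<cdot>\<^sub>v y)) =
    Re (quad H x) + 2 * t * Re ((H *\<^sub>v x) \<bullet>c y) + t\<^sup>2 * Re (quad H y)"
proof -
  let ?t = "complex_of_real t"
  define z where "z = x + ?t \<cdot>\<^sub>v y"
  have z: "z \<in> carrier_vec n" unfolding z_def using x y by simp
  have zi: "z $ j = x$j + ?t * y$j" if "j < n" for j unfolding z_def using that x y by simp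
  have pt: "H$$(i,j) * z$j * cnj (z$i) = H$$(i,j) * x$j * cnj (x$i) + ?t * (H$$(i,j) * y$j * cnj (x$i))
     + ?t * (H$$(i,j) * x$j * cnj (y$i)) + ?t\<^sup>2 * (H$$(i,j) * y$j * cnj (y$i))" if "i < n" "j < n" for i j
    unfolding zi[OF that(1)] zi[OF that(2)] by (simp add: algebra_simps power2_eq_square)
  have "quad H z = (\<Sum>i<n. \<Sum>j<n. H$$(i,j) * z$j * cnj (z$i))"
    unfolding quad_def by (rule bil_sum[OF H(1) z z])
  also have "\<dots> = (\<Sum>i<n. \<Sum>j<n. H$$(i,j) * x$j * cnj (x$i) + ?t * (H$$(i,j) * y$j * cnj (x$i))
     + ?t * (H$$(i,j) * x$j * cnj (y$i)) + ?t\<^sup>2 * (H$$(i,j) * y$j * cnj (y$i)))"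
    by (intro sum.cong refl) (simp add: pt)
  also have "\<dots> = (\<Sum>i<n. \<Sum>j<n. H$$(i,j) * x$j * cnj (x$i)) + ?t * (\<Sum>i<n. \<Sum>j<n. H$$(i,j) * y$j * cnj (x$i))
     + ?t * (\<Sum>i<n. \<Sum>j<n. H$$(i,j) * x$j * cnj (y$i)) + ?t\<^sup>2 * (\<Sum>i<n. \<Sum>j<n. H$$(i,j) * y$j * cnj (y$i))"
    by (simp only: sum.distrib sum_distrib_left)
  also have "\<dots> = quad H x + ?t * ((H *\<^sub>v y) \<bullet>c x) + ?t * ((H *\<^sub>v x) \<bullet>c y) + ?t\<^sup>2 * quad H y"
    unfolding quad_def using bil_sum[OF H(1)] x y by simp
  finally have e: "quad H z = quad H x + ?t * ((H *\<^sub>v y) \<bullet>c x) + ?t * ((H *\<^sub>v x) \<bullet>c y) + ?t\<^sup>2 * quad H y" .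
  have "(H *\<^sub>v y) \<bullet>c x = y \<bullet>c (H *\<^sub>v x)" by (rule herm_move[OF H y x])
  also have "\<dots> = cnj ((H *\<^sub>v x) \<bullet>c y)" by (rule sprodc_swap) (use H x y in simp)
  finally have c: "Re ((H *\<^sub>v y) \<bullet>c x) = Re ((H *\<^sub>v x) \<bullet>c y)" by simp
  show ?thesis unfolding z_def[symmetric] e using c
    by (simp add: power2_eq_square)
qed



lemma nsq_pos: "x \<in> carrier_vec n \<Longrightarrow> x \<noteq> 0\<^sub>v n \<Longrightarrow> nsq x > 0"
  using nsq_zero[of x] nsq_ge0[of x] by force

lemma eigen_lower: fixes A :: "complex mat"
  assumes A: "A \<in> carrier_mat n n" "mat_adjoint A = A" and n: "n > 0"
  and psd: "\<And>x. x \<in> carrier_vec n \<Longrightarrow> 0 \<le> Re (quad A x)"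
  shows "\<exists>\<mu>. eigenvalue A (complex_of_real \<mu>) \<and> (\<forall>x\<in>carrier_vec n. \<mu> * nsq x \<le> Re (quad A x))"
proof -
  define S where "S = {Re (quad A x) / nsq x | x. x \<in> carrier_vec n \<and> x \<noteq> 0\<^sub>v n}"
  have u: "unit_vec n 0 \<in> carrier_vec n" "unit_vec n 0 \<noteq> 0\<^sub>v n"
  proof -
    show "unit_vec n 0 \<in> carrier_vec n" by simp
    have "unit_vec n 0 $ 0 = (1::complex)" using n by simp
    thus "unit_vec n 0 \<noteq> 0\<^sub>v n" using n by auto
  qed
  have Sne: "S \<noteq> {}" unfolding S_def using u by blast
  have Sbdd: "bdd_below S"
  proof (rule bdd_belowI[of S 0])
    fix s assume "s \<in> S"
    then obtain x where "x \<in> carrier_vec n" "s = Re (quad A x) / nsq x" unfolding S_def by blast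
    thus "0 \<le> s" using psd nsq_ge0[of x] by simp
  qed
  define \<mu> where "\<mu> = Inf S"
  have low: "\<mu> * nsq x \<le> Re (quad A x)" if x: "x \<in> carrier_vec n" for x
  proof (cases "x = 0\<^sub>v n")
    case True
    have "nsq x = 0" unfolding True nsq_def by simp
    thus ?thesis using psd[OF x] by simp
  next
    case False
    have "Re (quad A x) / nsq x \<in> S" unfolding S_def using x False by blast
    hence "\<mu> \<le> Re (quad A x) / nsq x" unfolding \<mu>_def using Sbdd by (rule cInf_lower)
    thus ?thesis using nsq_pos[OF x False] by (simp add: pos_le_divide_eq)
  qed
  have "eigenvalue A (complex_of_real \<mu>)"
  proof (rule ccontr)
    assume ne: "\<not> eigenvalue A (complex_of_real \<mu>)"
    define H where "H = mat n n (\<lambda>(i,j). A$$(i,j) - (if i = j then complex_of_real \<mu> else 0))"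
    have Hc: "H \<in> carrier_mat n n" unfolding H_def by simp
    have Hidx: "H $$ (i,j) = A$$(i,j) - (if i = j then complex_of_real \<mu> else 0)" if "i < n" "j < n" for i j
      unfolding H_def using that by simp
    have Hv: "H *\<^sub>v x = A *\<^sub>v x - complex_of_real \<mu> \<cdot>\<^sub>v x" if x: "x \<in> carrier_vec n" for x
    proof (rule eq_vecI)
      fix i assume "i < dim_vec (A *\<^sub>v x - complex_of_real \<mu> \<cdot>\<^sub>v x)"
      hence i: "i < n" using A x by simp
      have "(H *\<^sub>v x) $ i = (\<Sum>j<n. A$$(i,j) * x$j - (if i = j then complex_of_real \<mu> * x$j else 0))"
        using Hc x i by (simp add: mv_sum Hidx left_diff_distrib del: index_mult_mat_vec) (intro sum.cong refl, simp)
      also have "\<dots> = (\<Sum>j<n. A$$(i,j) * x$j) - complex_of_real \<mu> * x$i"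
        using i by (simp add: sum_subtractf)
      also have "\<dots> = (A *\<^sub>v x - complex_of_real \<mu> \<cdot>\<^sub>v x) $ i"
        using A x i by (simp add: mv_sum del: index_mult_mat_vec)
      finally show "(H *\<^sub>v x) $ i = (A *\<^sub>v x - complex_of_real \<mu> \<cdot>\<^sub>v x) $ i" .
    qed (use Hc A x in simp)
    have Hherm: "mat_adjoint H = H"
    proof (rule eq_matI)
      fix i j assume ij: "i < dim_row H" "j < dim_col H"
      hence ij': "i < n" "j < n" using Hc by auto
      have "mat_adjoint H $$ (i,j) = cnj (H $$ (j,i))" by (rule adj_index) (use ij' Hc in auto)
      also have "\<dots> = H $$ (i,j)" unfolding Hidx[OF ij'] Hidx[OF ij'(2,1)]
        using herm_index[OF A ij'] by auto
      finally show "mat_adjoint H $$ (i,j) = H $$ (i,j)" .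
    qed (use Hc in auto)
    have qH: "Re (quad H x) = Re (quad A x) - \<mu> * nsq x" if x: "x \<in> carrier_vec n" for x
    proof -
      have "quad H x = (A *\<^sub>v x - complex_of_real \<mu> \<cdot>\<^sub>v x) \<bullet> conjugate x"
        unfolding quad_def Hv[OF x] by simp
      also have "\<dots> = (A *\<^sub>v x) \<bullet> conjugate x - (complex_of_real \<mu> \<cdot>\<^sub>v x) \<bullet> conjugate x"
        by (rule minus_scalar_prod_distrib[of _ n]) (use A x in auto)
      also have "\<dots> = quad A x - complex_of_real \<mu> * (x \<bullet>c x)"
        unfolding quad_def using x by (simp add: smult_scalar_prod_distrib[of _ n])
      finally show ?thesis by (simp add: sprodc_self)
    qed
    have qH0: "0 \<le> Re (quad H x)" if "x \<in> carrier_vec n" for x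
      using qH[OF that] low[OF that] by simp
    have inj: "x = 0\<^sub>v n" if x: "x \<in> carrier_vec n" and Hx: "H *\<^sub>v x = 0\<^sub>v n" for x
    proof (rule ccontr)
      assume x0: "x \<noteq> 0\<^sub>v n"
      have "A *\<^sub>v x = complex_of_real \<mu> \<cdot>\<^sub>v x"
      proof (rule eq_vecI)
        fix i assume "i < dim_vec (complex_of_real \<mu> \<cdot>\<^sub>v x)"
        hence i: "i < n" using x by simp
        have "(H *\<^sub>v x) $ i = 0" using Hx i by simp
        thus "(A *\<^sub>v x) $ i = (complex_of_real \<mu> \<cdot>\<^sub>v x) $ i" unfolding Hv[OF x] using i A x by simp
      qed (use A x in simp)
      hence "eigenvector A x (complex_of_real \<mu>)" unfolding eigenvector_def using A x x0 by simp
      thus False using ne unfolding eigenvalue_def by blast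
    qed
    have det: "det H \<noteq> 0" using inj unfolding det_0_iff_vec_prod_zero[OF Hc] by blast
    from det_non_zero_imp_unit[OF Hc det, of "()"]
    obtain B where B: "B \<in> carrier_mat n n" "B * H = 1\<^sub>m n"
      unfolding Units_def ring_mat_def by auto
    have xB: "x = B *\<^sub>v (H *\<^sub>v x)" if x: "x \<in> carrier_vec n" for x
    proof -
      have "B *\<^sub>v (H *\<^sub>v x) = (B * H) *\<^sub>v x" by (rule assoc_mult_mat_vec[symmetric, OF B(1) Hc x])
      thus ?thesis using B(2) x by simp
    qed
    define fH where "fH = sqrt (frob H)"
    have fH0: "fH \<ge> 0" unfolding fH_def using frob_ge0 by simp
    have KH: "Re (quad H z) \<le> fH * nsq z" if z: "z \<in> carrier_vec n" for z
    proof -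
      have "(cmod (quad H z))\<^sup>2 \<le> nsq (H *\<^sub>v z) * nsq z"
        unfolding quad_def by (rule cs_vec) (use Hc z in simp)
      also have "\<dots> \<le> (frob H * nsq z) * nsq z"
        by (rule mult_right_mono[OF frob_bound nsq_ge0]) (use Hc z in simp)
      also have "\<dots> = (fH * nsq z)\<^sup>2" unfolding fH_def using frob_ge0[of H]
        by (simp add: power2_eq_square power_mult_distrib)
      finally have "cmod (quad H z) \<le> fH * nsq z"
        by (rule power2_le_imp_le) (use fH0 nsq_ge0[of z] in simp)
      thus ?thesis using complex_Re_le_cmod[of "quad H z"] by linarith
    qed
    have bound: "nsq (H *\<^sub>v x) \<le> fH * Re (quad H x)" if x: "x \<in> carrier_vec n" for x
    proof -
      let ?a = "Re (quad H x)" and ?c = "nsq (H *\<^sub>v x)" and ?b = "Re (quad H (H *\<^sub>v x))"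
      have Hx: "H *\<^sub>v x \<in> carrier_vec n" using Hc x by simp
      have "?c\<^sup>2 \<le> ?a * ?b"
      proof (rule discr)
        show "0 \<le> ?b" by (rule qH0[OF Hx])
        fix t
        have "0 \<le> Re (quad H (x + complex_of_real t \<cdot>\<^sub>v (H *\<^sub>v x)))" by (rule qH0) (use x Hx in simp)
        also have "\<dots> = ?a + 2 * t * Re ((H *\<^sub>v x) \<bullet>c (H *\<^sub>v x)) + t\<^sup>2 * ?b"
          by (rule quad_expand[OF Hc Hherm x Hx])
        finally show "0 \<le> ?a + 2 * t * ?c + t\<^sup>2 * ?b" by (simp add: sprodc_self)
      qed
      also have "\<dots> \<le> ?a * (fH * ?c)" by (rule mult_left_mono[OF KH[OF Hx] qH0[OF x]])
      finally have le: "?c * ?c \<le> (?a * fH) * ?c" by (simp add: power2_eq_square mult_ac)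
      show ?thesis
      proof (cases "?c = 0")
        case True thus ?thesis using fH0 qH0[OF x] by simp
      next
        case False
        hence "?c > 0" using nsq_ge0[of "H *\<^sub>v x"] by simp
        thus ?thesis using le by (simp add: mult.commute)
      qed
    qed
    define C where "C = frob B * fH + 1"
    have C: "C > 0" unfolding C_def using frob_ge0[of B] fH0 by (simp add: add_nonneg_pos)
    have key: "nsq x \<le> C * Re (quad H x)" if x: "x \<in> carrier_vec n" for x
    proof -
      have Hx: "H *\<^sub>v x \<in> carrier_vec n" using Hc x by simp
      have "nsq x = nsq (B *\<^sub>v (H *\<^sub>v x))" using xB[OF x] by simp
      also have "\<dots> \<le> frob B * nsq (H *\<^sub>v x)" by (rule frob_bound) (use B Hx Hc in simp)
      also have "\<dots> \<le> frob B * (fH * Re (quad H x))" by (rule mult_left_mono[OF bound[OF x] frob_ge0])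
      also have "\<dots> \<le> C * Re (quad H x)" unfolding C_def using qH0[OF x]
        by (simp add: distrib_right mult.assoc)
      finally show ?thesis .
    qed
    have "Inf S < \<mu> + 1 / (2 * C)" unfolding \<mu>_def using C by simp
    then obtain s where s: "s \<in> S" "s < \<mu> + 1 / (2 * C)" using cInf_less_iff[OF Sne Sbdd] by blast
    then obtain x where x: "x \<in> carrier_vec n" "x \<noteq> 0\<^sub>v n" and sx: "s = Re (quad A x) / nsq x"
      unfolding S_def by blast
    have np: "nsq x > 0" by (rule nsq_pos[OF x])
    have "Re (quad A x) < (\<mu> + 1 / (2 * C)) * nsq x" using s(2) sx np by (simp add: divide_less_eq)
    hence "Re (quad H x) < nsq x / (2 * C)" unfolding qH[OF x(1)] by (simp add: algebra_simps)
    hence "C * Re (quad H x) < C * (nsq x / (2 * C))" by (rule mult_strict_left_mono) (use C in auto)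
    also have "\<dots> = nsq x / 2" using C by simp
    finally show False using key[OF x(1)] np by simp
  qed
  thus ?thesis using low by blast
qed



lemma lmin_bound: fixes U :: "complex mat" assumes U: "U \<in> carrier_mat n m" and n: "n > 0"
  and y: "y \<in> carrier_vec n"
  shows "lambda_min (U * mat_adjoint U) * nsq y \<le> nsq (mat_adjoint U *\<^sub>v y)"
proof -
  define A where "A = U * mat_adjoint U"
  note gp = gram_props[OF U, folded A_def]
  have psd: "0 \<le> Re (quad A x)" if "x \<in> carrier_vec n" for x
    using gp(3)[OF that] nsq_ge0 by simp
  obtain \<mu> where mu: "eigenvalue A (complex_of_real \<mu>)" "\<forall>x\<in>carrier_vec n. \<mu> * nsq x \<le> Re (quad A x)"
    using eigen_lower[OF gp(1,2) n psd] by blast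
  have cp: "char_poly A \<noteq> 0" using degree_monic_char_poly[OF gp(1)] by auto
  have "{k. eigenvalue A k} = {k. poly (char_poly A) k = 0}"
    using eigenvalue_root_char_poly[OF gp(1)] by auto
  hence fin: "finite {k. eigenvalue A k}" using poly_roots_finite[OF cp] by simp
  have E: "{Re k | k. eigenvalue A k} = Re ` {k. eigenvalue A k}" by auto
  have "lambda_min A \<le> \<mu>" unfolding lambda_min_def E
    by (rule Min_le) (use fin mu(1) in \<open>auto intro!: image_eqI[of _ _ "complex_of_real \<mu>"]\<close>)
  hence "lambda_min A * nsq y \<le> \<mu> * nsq y" by (rule mult_right_mono[OF _ nsq_ge0])
  also have "\<dots> \<le> Re (quad A y)" using mu(2) y by blast
  also have "\<dots> = nsq (mat_adjoint U *\<^sub>v y)" using gp(3)[OF y] by simp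
  finally show ?thesis unfolding A_def .
qed

lemma sum_blocks: fixes T m :: nat and f :: "nat \<Rightarrow> 'a::comm_monoid_add" shows "(\<Sum>r<T*m. f r) = (\<Sum>t<T. \<Sum>i<m. f (t*m+i))"
proof -
  have "(\<Sum>r<T*m. f r) = (\<Sum>t<T. sum f {t*m..<t*m+m})" using sum.nat_group[of f m T] by simp
  also have "\<dots> = (\<Sum>t<T. \<Sum>i<m. f (t*m+i))"
  proof -
    have h: "sum f {a..<a+m} = (\<Sum>i<m. f (a+i))" for a
      using sum.shift_bounds_nat_ivl[of f 0 a m] by (simp add: add.commute atLeast0LessThan)
    show ?thesis by (simp only: h)
  qed
  finally show ?thesis .
qed

lemma dm: "i < (m::nat) \<Longrightarrow> (t*m+i) div m = t" "i < (m::nat) \<Longrightarrow> (t*m+i) mod m = i"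
  by auto

definition blk :: "nat \<Rightarrow> complex vec \<Rightarrow> nat \<Rightarrow> complex vec" where
  "blk m w t = vec m (\<lambda>i. w $ (t*m + i))"

lemma blk_carrier[simp]: "blk m w t \<in> carrier_vec m" unfolding blk_def by simp
lemma blk_dim[simp]: "dim_vec (blk m w t) = m" unfolding blk_def by simp
lemma blk_index[simp]: "i < m \<Longrightarrow> blk m w t $ i = w $ (t*m+i)" unfolding blk_def by simp

lemma kron_dims[simp]: "dim_row (kron A B) = dim_row A * dim_row B" "dim_col (kron A B) = dim_col A * dim_col B"
  unfolding kron_def by auto

lemma kron_mv: fixes B :: "complex mat" assumes B: "B \<in> carrier_mat m k" and x: "x \<in> carrier_vec (T*k)"
  and t: "t < T" and i: "i < m"
  shows "(kron (1\<^sub>m T) B *\<^sub>v x) $ (t*m+i) = (B *\<^sub>v blk k x t) $ i"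
proof -
  have r: "t*m+i < T*m"
  proof -
    have "t*m+i < t*m+m" using i by simp
    also have "\<dots> \<le> T*m" using t by (metis Suc_leI add.commute mult_Suc mult_le_mono1)
    finally show ?thesis .
  qed
  have idx: "kron (1\<^sub>m T) B $$ (t*m+i, s*k+l) = (if t = s then B$$(i,l) else 0)"
    if "s < T" "l < k" for s l
  proof -
    have sl: "s*k+l < T*k"
    proof -
      have "s*k+l < s*k+k" using that by simp
      also have "\<dots> \<le> T*k" using that by (metis Suc_leI add.commute mult_Suc mult_le_mono1)
      finally show ?thesis .
    qed
    show ?thesis unfolding kron_def using B r sl that i t by (simp add: dm)
  qed
  have "(kron (1\<^sub>m T) B *\<^sub>v x) $ (t*m+i) = (\<Sum>j<T*k. kron (1\<^sub>m T) B $$ (t*m+i, j) * x$j)"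
    using r B x by (simp add: mv_sum del: index_mult_mat_vec)
  also have "\<dots> = (\<Sum>s<T. \<Sum>l<k. kron (1\<^sub>m T) B $$ (t*m+i, s*k+l) * x$(s*k+l))"
    by (rule sum_blocks)
  also have "\<dots> = (\<Sum>s<T. \<Sum>l<k. (if t = s then B$$(i,l) * x$(s*k+l) else 0))"
    by (intro sum.cong refl) (simp add: idx)
  also have "\<dots> = (\<Sum>s<T. if t = s then (\<Sum>l<k. B$$(i,l) * x$(s*k+l)) else 0)"
    by (intro sum.cong refl) simp
  also have "\<dots> = (\<Sum>l<k. B$$(i,l) * x$(t*k+l))"
    using t by (simp add: sum.delta)
  also have "\<dots> = (B *\<^sub>v blk k x t) $ i"
    using B i by (simp add: mv_sum del: index_mult_mat_vec)
  finally show ?thesis .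
qed



lemma vs_carrier: "U \<in> carrier_mat n T \<Longrightarrow> vec_stack U \<in> carrier_vec (T*n)"
  unfolding vec_stack_def by (simp add: mult.commute)

lemma vs_blk: assumes "U \<in> carrier_mat n T" "t < T" "j < n"
  shows "vec_stack U $ (t*n+j) = U$$(j,t)"
proof -
  have "t*n+j < t*n+n" using assms by simp
  also have "\<dots> \<le> T*n" using assms by (metis Suc_leI add.commute mult_Suc mult_le_mono1)
  finally have r: "t*n+j < n*T" by (simp add: mult.commute)
  show ?thesis using assms r unfolding vec_stack_def by (simp add: dm)
qed

definition cc :: "complex vec \<Rightarrow> complex mat \<Rightarrow> nat \<Rightarrow> complex" where
  "cc s U t = (\<Sum>j<dim_vec s. s$j * U$$(j,t))"

lemma G_carrier: assumes "g \<in> carrier_vec m" "s \<in> carrier_vec n" "U \<in> carrier_mat n T"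
  shows "Gmat T g s *\<^sub>v vec_stack U \<in> carrier_vec (T*m)"
  using assms unfolding Gmat_def carrier_vec_def by simp

lemma G_index: assumes g: "g \<in> carrier_vec m" and s: "s \<in> carrier_vec n" and U: "U \<in> carrier_mat n T"
  and t: "t < T" and i: "i < m"
  shows "(Gmat T g s *\<^sub>v vec_stack U) $ (t*m+i) = g$i * cc s U t"
proof -
  define M where "M = mat (dim_vec g) (dim_vec s) (\<lambda>(i, j). g $ i * s $ j)"
  have M: "M \<in> carrier_mat m n" unfolding M_def using g s by simp
  have "(Gmat T g s *\<^sub>v vec_stack U) $ (t*m+i) = (M *\<^sub>v blk n (vec_stack U) t) $ i"
    unfolding Gmat_def M_def[symmetric] by (rule kron_mv[OF M vs_carrier[OF U] t i])
  also have "\<dots> = (\<Sum>j<n. (g$i * s$j) * U$$(j,t))"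
    using M i g s U t by (simp add: mv_sum vs_blk M_def del: index_mult_mat_vec)
  also have "\<dots> = g$i * cc s U t" unfolding cc_def using s by (simp add: sum_distrib_left mult.assoc)
  finally show ?thesis .
qed

lemma G_sprod: assumes g: "g \<in> carrier_vec m" and s: "s \<in> carrier_vec n" and U: "U \<in> carrier_mat n T"
  and w: "w \<in> carrier_vec (T*m)"
  shows "(Gmat T g s *\<^sub>v vec_stack U) \<bullet>c w = (\<Sum>t<T. cc s U t * (g \<bullet>c blk m w t))"
proof -
  let ?v = "Gmat T g s *\<^sub>v vec_stack U"
  have v: "?v \<in> carrier_vec (T*m)" by (rule G_carrier[OF g s U])
  have d: "dim_vec ?v = T*m" "dim_vec w = T*m" by (simp_all only: carrier_vecD[OF v] carrier_vecD[OF w])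
  have "?v \<bullet>c w = (\<Sum>r<T*m. ?v$r * cnj (w$r))" using d by (simp add: sprodc_sum)
  also have "\<dots> = (\<Sum>t<T. \<Sum>i<m. ?v$(t*m+i) * cnj (w$(t*m+i)))" by (rule sum_blocks)
  also have "\<dots> = (\<Sum>t<T. \<Sum>i<m. cc s U t * (g$i * cnj (blk m w t $ i)))"
    by (intro sum.cong refl) (simp add: G_index[OF g s U] mult_ac)
  also have "\<dots> = (\<Sum>t<T. cc s U t * (g \<bullet>c blk m w t))"
    using carrier_vecD[OF g] by (simp add: sprodc_sum sum_distrib_left)
  finally show ?thesis .
qed

lemma cc_adj: assumes "U \<in> carrier_mat n T" "s \<in> carrier_vec n" "t < T"
  shows "(mat_adjoint U *\<^sub>v conjugate s) $ t = cnj (cc s U t)"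
  using assms unfolding cc_def by (simp add: mv_sum cnj_sum mult.commute del: index_mult_mat_vec)

lemma nsq_adj: assumes "U \<in> carrier_mat n T" "s \<in> carrier_vec n"
  shows "nsq (mat_adjoint U *\<^sub>v conjugate s) = (\<Sum>t<T. (cmod (cc s U t))\<^sup>2)"
proof -
  have d: "dim_vec (mat_adjoint U *\<^sub>v conjugate s) = T" using assms by simp
  show ?thesis unfolding nsq_def d
    by (intro sum.cong refl) (simp add: cc_adj[OF assms] del: index_mult_mat_vec)
qed

lemma adj_zero: assumes "U \<in> carrier_mat n T" "s \<in> carrier_vec n"
  and "mat_adjoint U *\<^sub>v conjugate s = 0\<^sub>v T" "t < T"
  shows "cc s U t = 0"
proof -
  have "(mat_adjoint U *\<^sub>v conjugate s) $ t = 0" using assms(3,4) by simp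
  thus ?thesis using cc_adj[OF assms(1,2,4)] by simp
qed

lemma quad1: assumes "v \<in> carrier_vec N" "w \<in> carrier_vec N"
  shows "(\<Sum>i<N. \<Sum>j<N. (v$i * cnj (v$j)) * w$j * cnj (w$i)) = (v \<bullet>c w) * cnj (v \<bullet>c w)"
proof -
  have "(v \<bullet>c w) * cnj (v \<bullet>c w) = (\<Sum>i<N. v$i * cnj (w$i)) * (\<Sum>j<N. cnj (v$j) * w$j)"
    using assms by (simp add: sprodc_sum cnj_sum)
  also have "\<dots> = (\<Sum>i<N. \<Sum>j<N. v$i * cnj (w$i) * (cnj (v$j) * w$j))" by (rule sum_product)
  also have "\<dots> = (\<Sum>i<N. \<Sum>j<N. (v$i * cnj (v$j)) * w$j * cnj (w$i))"
    by (intro sum.cong refl) (simp add: mult_ac)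
  finally show ?thesis by simp
qed

lemma quad_outer: fixes a :: "nat \<Rightarrow> complex" and v :: "nat \<Rightarrow> complex vec"
  assumes w: "w \<in> carrier_vec N" and v0: "v0 \<in> carrier_vec N" and v: "\<And>k. k \<in> K \<Longrightarrow> v k \<in> carrier_vec N"
  and K: "finite K"
  shows "quad (mat N N (\<lambda>ij. cz * outer v0 $$ ij + (\<Sum>k\<in>K. a k * outer (v k) $$ ij))) w
    = cz * ((v0 \<bullet>c w) * cnj (v0 \<bullet>c w)) + (\<Sum>k\<in>K. a k * ((v k \<bullet>c w) * cnj (v k \<bullet>c w)))"
proof -
  let ?M = "mat N N (\<lambda>ij. cz * outer v0 $$ ij + (\<Sum>k\<in>K. a k * outer (v k) $$ ij))"
  have M: "?M \<in> carrier_mat N N" by simp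
  have o: "outer (v k) $$ (i,j) = v k$i * cnj (v k$j)" if "k \<in> K" "i < N" "j < N" for k i j
    using v[OF that(1)] that unfolding outer_def by simp
  have o0: "outer v0 $$ (i,j) = v0$i * cnj (v0$j)" if "i < N" "j < N" for i j
    using v0 that unfolding outer_def by simp
  have Mi: "?M $$ (i,j) = cz * (v0$i * cnj (v0$j)) + (\<Sum>k\<in>K. a k * (v k$i * cnj (v k$j)))"
    if "i < N" "j < N" for i j
    using that by (simp add: o o0 cong: sum.cong)
  have "quad ?M w = (\<Sum>i<N. \<Sum>j<N. ?M$$(i,j) * w$j * cnj (w$i))"
    unfolding quad_def by (rule bil_sum[OF M w w])
  also have "\<dots> = (\<Sum>i<N. \<Sum>j<N. cz * ((v0$i * cnj (v0$j)) * w$j * cnj (w$i))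
       + (\<Sum>k\<in>K. a k * ((v k$i * cnj (v k$j)) * w$j * cnj (w$i))))"
    by (intro sum.cong refl) (simp add: Mi[simplified] distrib_left sum_distrib_left mult_ac del: index_mat)
  also have "\<dots> = cz * (\<Sum>i<N. \<Sum>j<N. (v0$i * cnj (v0$j)) * w$j * cnj (w$i))
       + (\<Sum>i<N. \<Sum>j<N. \<Sum>k\<in>K. a k * ((v k$i * cnj (v k$j)) * w$j * cnj (w$i)))"
    by (simp only: sum.distrib sum_distrib_left)
  also have "(\<Sum>i<N. \<Sum>j<N. \<Sum>k\<in>K. a k * ((v k$i * cnj (v k$j)) * w$j * cnj (w$i)))
      = (\<Sum>k\<in>K. a k * (\<Sum>i<N. \<Sum>j<N. (v k$i * cnj (v k$j)) * w$j * cnj (w$i)))"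
    by (simp only: sum_distrib_left sum.swap[of _ K])
  also have "\<dots> = (\<Sum>k\<in>K. a k * ((v k \<bullet>c w) * cnj (v k \<bullet>c w)))"
    by (intro sum.cong refl) (simp add: quad1[OF v w])
  finally show ?thesis by (simp add: quad1[OF v0 w])
qed



lemma ReQ: fixes c :: "nat \<Rightarrow> real" and v :: "nat \<Rightarrow> complex vec"
  assumes w: "w \<in> carrier_vec N" and v0: "v0 \<in> carrier_vec N" and v: "\<And>k. k \<in> K \<Longrightarrow> v k \<in> carrier_vec N"
  and K: "finite K"
  shows "Re (quad (mat N N (\<lambda>ij. complex_of_real c0 * outer v0 $$ ij + (\<Sum>k\<in>K. complex_of_real (c k) * outer (v k) $$ ij))) w)
    = c0 * (cmod (v0 \<bullet>c w))\<^sup>2 + (\<Sum>k\<in>K. c k * (cmod (v k \<bullet>c w))\<^sup>2)"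
proof -
  have e: "z * cnj z = complex_of_real ((cmod z)\<^sup>2)" for z by (rule complex_norm_square[symmetric])
  have q: "quad (mat N N (\<lambda>ij. complex_of_real c0 * outer v0 $$ ij + (\<Sum>k\<in>K. complex_of_real (c k) * outer (v k) $$ ij))) w
    = complex_of_real c0 * ((v0 \<bullet>c w) * cnj (v0 \<bullet>c w)) + (\<Sum>k\<in>K. complex_of_real (c k) * ((v k \<bullet>c w) * cnj (v k \<bullet>c w)))"
    by (rule quad_outer[OF w v0 v K])
  show ?thesis unfolding q e by (simp add: Re_sum)
qed

lemma QX_bound: fixes c :: "nat \<Rightarrow> real" and v :: "nat \<Rightarrow> complex vec"
  assumes w: "w \<in> carrier_vec N" and v0: "v0 \<in> carrier_vec N" and v: "\<And>k. k \<in> K \<Longrightarrow> v k \<in> carrier_vec N"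
  and c0: "c0 \<ge> 0" and c: "\<And>k. k \<in> K \<Longrightarrow> c k \<ge> 0"
  shows "c0 * (cmod (v0 \<bullet>c w))\<^sup>2 + (\<Sum>k\<in>K. c k * (cmod (v k \<bullet>c w))\<^sup>2)
     \<le> (c0 * nsq v0 + (\<Sum>k\<in>K. c k * nsq (v k))) * nsq w"
proof -
  have "c0 * (cmod (v0 \<bullet>c w))\<^sup>2 \<le> c0 * (nsq v0 * nsq w)"
    by (rule mult_left_mono[OF cs_vec c0]) (use v0 w in simp)
  moreover have "(\<Sum>k\<in>K. c k * (cmod (v k \<bullet>c w))\<^sup>2) \<le> (\<Sum>k\<in>K. c k * (nsq (v k) * nsq w))"
  proof (rule sum_mono)
    fix k assume k: "k \<in> K"
    show "c k * (cmod (v k \<bullet>c w))\<^sup>2 \<le> c k * (nsq (v k) * nsq w)"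
      by (rule mult_left_mono[OF cs_vec c[OF k]]) (use v[OF k] w in simp)
  qed
  ultimately show ?thesis by (simp add: distrib_right sum_distrib_right mult.assoc)
qed

lemma kron_blk: fixes P :: "complex mat" assumes P: "P \<in> carrier_mat m m" and x: "x \<in> carrier_vec (T*m)" and t: "t < T"
  shows "blk m (kron (1\<^sub>m T) P *\<^sub>v x) t = P *\<^sub>v blk m x t"
  by (rule eq_vecI) (use P x t kron_mv[OF P x t] in auto)

lemma G_blk: assumes g: "g \<in> carrier_vec m" and s: "s \<in> carrier_vec n" and U: "U \<in> carrier_mat n T" and t: "t < T"
  shows "blk m (Gmat T g s *\<^sub>v vec_stack U) t = cc s U t \<cdot>\<^sub>v g"
  by (rule eq_vecI) (use g G_index[OF g s U t] in auto)

lemma nsq_blocks: "w \<in> carrier_vec (T*m) \<Longrightarrow> nsq w = (\<Sum>t<T. nsq (blk m w t))"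
  unfolding nsq_def by (simp add: sum_blocks)

lemma nsq_smult: "nsq (c \<cdot>\<^sub>v v) = (cmod c)\<^sup>2 * nsq v"
  unfolding nsq_def by (simp add: norm_mult power_mult_distrib sum_distrib_left)

lemma nsq_zero_vec[simp]: "nsq (0\<^sub>v n) = 0" unfolding nsq_def by simp

lemma nsq_conj_unit: assumes "s \<in> carrier_vec n" "\<forall>i<n. cmod (s $ i) = 1"
  shows "nsq (conjugate s) = real n"
  unfolding nsq_def using assms by simp

lemma kron_range: fixes P :: "complex mat" assumes P: "P \<in> carrier_mat m m" and w: "w \<in> mat_range (kron (1\<^sub>m T) P)"
  shows "w \<in> carrier_vec (T*m)" "\<And>t. t < T \<Longrightarrow> blk m w t \<in> mat_range P"
proof -
  obtain x where x: "x \<in> carrier_vec (T*m)" "w = kron (1\<^sub>m T) P *\<^sub>v x"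
    using w P unfolding mat_range_def by auto
  show "w \<in> carrier_vec (T*m)" using x P unfolding carrier_vec_def by simp
  fix t assume t: "t < T"
  show "blk m w t \<in> mat_range P" unfolding x(2) kron_blk[OF P x(1) t]
    using P unfolding mat_range_def by auto
qed

lemma is_proj_one: "is_proj n (1\<^sub>m n) (carrier_vec n)"
  unfolding is_proj_def mat_range_def
  by (auto intro!: eq_matI) (metis one_carrier_mat one_mult_mat_vec)+



lemma Lambda_ge: fixes P X :: "complex mat"
  assumes P: "P \<in> carrier_mat m m" and w: "w \<in> mat_range (kron (1\<^sub>m T) P)" and w0: "w \<noteq> 0\<^sub>v (T*m)"
  and r: "r \<le> Re (quad X w) / nsq w"
  and bd: "\<And>w. w \<in> carrier_vec (T*m) \<Longrightarrow> Re (quad X w) \<le> K * nsq w"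
  shows "r \<le> Lambda T P X"
proof -
  have dr: "dim_row P = m" using P by simp
  let ?S = "{Re (quad X w) / Re (w \<bullet>c w) | w. w \<in> mat_range (kron (1\<^sub>m T) P) \<and> w \<noteq> 0\<^sub>v (T * dim_row P)}"
  have re: "Re (v \<bullet>c v) = nsq v" for v by (simp add: sprodc_self)
  have mem: "Re (quad X w) / nsq w \<in> ?S" using w w0 unfolding dr re by blast
  have bdd: "bdd_above ?S"
  proof (rule bdd_aboveI[of _ K])
    fix s assume "s \<in> ?S"
    then obtain v where v: "v \<in> mat_range (kron (1\<^sub>m T) P)" "v \<noteq> 0\<^sub>v (T*m)" "s = Re (quad X v) / nsq v"
      unfolding dr re by blast
    have vc: "v \<in> carrier_vec (T*m)" by (rule kron_range(1)[OF P v(1)])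
    have np: "nsq v > 0" by (rule nsq_pos[OF vc v(2)])
    show "s \<le> K" unfolding v(3) using bd[OF vc] np by (simp add: divide_le_eq)
  qed
  have "Re (quad X w) / nsq w \<le> Lambda T P X" unfolding Lambda_def by (rule cSup_upper[OF mem bdd])
  thus ?thesis using r by linarith
qed

lemma Lambda_zero: fixes P X :: "complex mat"
  assumes P: "P \<in> carrier_mat m m" "P \<noteq> 0\<^sub>m m m" and T: "T > 0"
  and z: "\<And>w. w \<in> mat_range (kron (1\<^sub>m T) P) \<Longrightarrow> Re (quad X w) = 0"
  shows "Lambda T P X = 0"
proof -
  have dr: "dim_row P = m" using P by simp
  have re: "Re (v \<bullet>c v) = nsq v" for v by (simp add: sprodc_self)
  obtain i j where ij: "i < m" "j < m" "P $$ (i,j) \<noteq> 0"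
    using P by (metis carrier_matD eq_matI index_zero_mat(1) index_zero_mat(2) index_zero_mat(3))
  define x :: "complex vec" where "x = unit_vec (T*m) j"
  have jT: "j < T*m" using ij T by (metis One_nat_def Suc_leI mult_1 mult_le_mono1 order_less_le_trans)
  have x: "x \<in> carrier_vec (T*m)" unfolding x_def by simp
  have mT: "m \<le> T*m" using T by simp
  have bx: "blk m x 0 = unit_vec m j"
  proof (rule eq_vecI)
    fix k assume "k < dim_vec (unit_vec m j)"
    hence k: "k < m" by simp
    hence "k < T*m" using mT by linarith
    thus "blk m x 0 $ k = unit_vec m j $ k" using k jT ij unfolding x_def by simp
  qed simp
  define w where "w = kron (1\<^sub>m T) P *\<^sub>v x"
  have wr: "w \<in> mat_range (kron (1\<^sub>m T) P)" unfolding w_def mat_range_def using x P by auto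
  have "w $ (0*m+i) = (P *\<^sub>v unit_vec m j) $ i"
    unfolding w_def using kron_mv[OF P(1) x T ij(1)] bx by simp
  also have "\<dots> = P $$ (i,j)" by (rule mv_unit[OF P(1) ij(1,2)])
  finally have "w $ i \<noteq> 0" using ij by simp
  hence w0: "w \<noteq> 0\<^sub>v (T*m)" using ij jT
    by (metis index_zero_vec(1) less_le_trans mult_le_mono1 One_nat_def Suc_leI T mult_1 \<open>i < m\<close>)
  have S: "{Re (quad X w) / Re (w \<bullet>c w) | w. w \<in> mat_range (kron (1\<^sub>m T) P) \<and> w \<noteq> 0\<^sub>v (T * dim_row P)} = {0}"
    using z wr w0 unfolding dr by auto
  show ?thesis unfolding Lambda_def S by simp
qed



lemma part_cd: fixes P X U :: "complex mat"
  assumes P: "is_proj m P V" and g: "g \<in> carrier_vec m" and s: "s \<in> carrier_vec n" "\<forall>i<n. cmod (s$i) = 1"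
  and U: "U \<in> carrier_mat n T" and n: "n > 0" and ka: "ka > 0"
  and hX: "\<And>w. w \<in> carrier_vec (T*m) \<Longrightarrow> ka * (cmod ((Gmat T g s *\<^sub>v vec_stack U) \<bullet>c w))\<^sup>2 \<le> Re (quad X w)"
  and bd: "\<And>w. w \<in> carrier_vec (T*m) \<Longrightarrow> Re (quad X w) \<le> K * nsq w"
  and ga: "Re (quad P g) > 0"
  and hl: "rho \<le> ka * Re (quad P g) * lambda_min (U * mat_adjoint U) * real n"
  and rho: "rho > 0"
  shows "rho \<le> Lambda T P X"
proof -
  have Pc: "P \<in> carrier_mat m m" "mat_adjoint P = P" "P * P = P" using P unfolding is_proj_def by auto
  define Pg where "Pg = P *\<^sub>v g"
  have Pgc: "Pg \<in> carrier_vec m" unfolding Pg_def using Pc g by simp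
  have "quad P g = (P *\<^sub>v (P *\<^sub>v g)) \<bullet>c g"
    unfolding quad_def using assoc_mult_mat_vec[OF Pc(1) Pc(1) g] Pc(3) by simp
  also have "\<dots> = Pg \<bullet>c Pg" unfolding Pg_def by (rule herm_move[OF Pc(1,2) _ g]) (use Pc g in simp)
  finally have qP: "quad P g = complex_of_real (nsq Pg)" by (simp add: sprodc_self)
  define ga where "ga = nsq Pg"
  have gap: "ga > 0" using ga qP unfolding ga_def by simp
  define x0 where "x0 = Gmat T g s *\<^sub>v vec_stack U"
  have x0c: "x0 \<in> carrier_vec (T*m)" unfolding x0_def by (rule G_carrier[OF g s(1) U])
  define w where "w = kron (1\<^sub>m T) P *\<^sub>v x0"
  have wr: "w \<in> mat_range (kron (1\<^sub>m T) P)" unfolding w_def mat_range_def using x0c Pc by auto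
  have wc: "w \<in> carrier_vec (T*m)" by (rule kron_range(1)[OF Pc(1) wr])
  have bw: "blk m w t = cc s U t \<cdot>\<^sub>v Pg" if t: "t < T" for t
  proof -
    have "blk m w t = P *\<^sub>v blk m x0 t" unfolding w_def by (rule kron_blk[OF Pc(1) x0c t])
    also have "blk m x0 t = cc s U t \<cdot>\<^sub>v g" unfolding x0_def by (rule G_blk[OF g s(1) U t])
    finally show ?thesis unfolding Pg_def using mult_mat_vec[OF Pc(1) g] by simp
  qed
  define S where "S = (\<Sum>t<T. (cmod (cc s U t))\<^sup>2)"
  have nw: "nsq w = ga * S"
    unfolding nsq_blocks[OF wc] S_def ga_def sum_distrib_left
    by (intro sum.cong refl) (simp add: bw nsq_smult)
  have gP: "g \<bullet>c Pg = complex_of_real ga"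
  proof -
    have "g \<bullet>c Pg = cnj (Pg \<bullet>c g)" by (rule sprodc_swap) (use g Pgc in simp)
    also have "Pg \<bullet>c g = quad P g" unfolding quad_def Pg_def ..
    finally show ?thesis unfolding qP ga_def by simp
  qed
  have gs: "g \<bullet>c (c \<cdot>\<^sub>v Pg) = cnj c * complex_of_real ga" for c
  proof -
    have "g \<bullet>c (c \<cdot>\<^sub>v Pg) = g \<bullet> (cnj c \<cdot>\<^sub>v conjugate Pg)"
      using conjugate_smult_vec[of c Pg] by simp
    also have "\<dots> = cnj c * (g \<bullet>c Pg)" by (rule scalar_prod_smult_right) (use g Pgc in simp)
    finally show ?thesis unfolding gP .
  qed
  have vw: "x0 \<bullet>c w = complex_of_real (ga * S)"
  proof -
    have "x0 \<bullet>c w = (\<Sum>t<T. cc s U t * (g \<bullet>c blk m w t))" unfolding x0_def by (rule G_sprod[OF g s(1) U wc])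
    also have "\<dots> = (\<Sum>t<T. complex_of_real (ga * (cmod (cc s U t))\<^sup>2))"
    proof (intro sum.cong refl)
      fix t assume "t \<in> {..<T}"
      hence t: "t < T" by simp
      have "cc s U t * (g \<bullet>c blk m w t) = cc s U t * (cnj (cc s U t) * complex_of_real ga)"
        unfolding bw[OF t] gs ..
      also have "\<dots> = (cc s U t * cnj (cc s U t)) * complex_of_real ga" by (simp only: mult.assoc)
      also have "\<dots> = complex_of_real ((cmod (cc s U t))\<^sup>2) * complex_of_real ga"
        by (simp only: complex_norm_square[symmetric])
      also have "\<dots> = complex_of_real (ga * (cmod (cc s U t))\<^sup>2)" by (simp only: of_real_mult[symmetric] mult.commute)
      finally show "cc s U t * (g \<bullet>c blk m w t) = complex_of_real (ga * (cmod (cc s U t))\<^sup>2)" .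
    qed
    finally show ?thesis unfolding S_def sum_distrib_left by simp
  qed
  have SS: "S = nsq (mat_adjoint U *\<^sub>v conjugate s)" unfolding S_def by (rule nsq_adj[OF U s(1), symmetric])
  have Sl: "lambda_min (U * mat_adjoint U) * real n \<le> S"
    using lmin_bound[OF U n carrier_vec_conjugate[OF s(1)]] nsq_conj_unit[OF s] SS by simp
  have lp: "lambda_min (U * mat_adjoint U) > 0"
  proof (rule ccontr)
    assume "\<not> ?thesis"
    hence l0: "lambda_min (U * mat_adjoint U) \<le> 0" by simp
    have "ka * Re (quad P g) \<ge> 0" using ka ga by simp
    hence "ka * Re (quad P g) * lambda_min (U * mat_adjoint U) \<le> 0" using l0 by (rule mult_nonneg_nonpos)
    hence "ka * Re (quad P g) * lambda_min (U * mat_adjoint U) * real n \<le> 0"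
      by (rule mult_nonpos_nonneg) simp
    thus False using hl rho by linarith
  qed
  have Sp: "S > 0" using Sl lp n by (metis mult_pos_pos of_nat_0_less_iff order_less_le_trans)
  have nwp: "nsq w > 0" unfolding nw using gap Sp by simp
  have w0: "w \<noteq> 0\<^sub>v (T*m)" using nwp by auto
  have "rho \<le> ka * ga * (lambda_min (U * mat_adjoint U) * real n)"
    using hl qP unfolding ga_def by (simp add: mult.assoc)
  also have "\<dots> \<le> ka * ga * S" by (rule mult_left_mono[OF Sl]) (use ka gap in simp)
  also have "\<dots> = ka * (ga * S)\<^sup>2 / nsq w" unfolding nw using gap Sp by (simp add: power2_eq_square)
  also have "\<dots> \<le> Re (quad X w) / nsq w"
  proof (rule divide_right_mono)
    have cm: "cmod (x0 \<bullet>c w) = ga * S" unfolding vw norm_of_real using gap Sp by simp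
    show "ka * (ga * S)\<^sup>2 \<le> Re (quad X w)" using hX[OF wc] cm unfolding x0_def[symmetric] by simp
  qed (use nwp in simp)
  finally show ?thesis by (rule Lambda_ge[OF Pc(1) wr w0 _ bd])
qed



theorem proposition5:
  fixes T Nt Nm Q :: nat
    and g s :: "nat \<Rightarrow> complex vec"
    and U :: "complex mat"
    and b0 sigmaz2 rho :: real
    and sigma2 :: "nat \<Rightarrow> real"
  assumes "T \<ge> 1" "Nt \<ge> 1" "Nm \<ge> 1"
    and g: "\<And>q. q \<le> Q \<Longrightarrow> g q \<in> carrier_vec Nm \<and> (\<forall>i<Nm. cmod (g q $ i) = 1)"
    and s: "\<And>q. q \<le> Q \<Longrightarrow> s q \<in> carrier_vec Nt \<and> (\<forall>i<Nt. cmod (s q $ i) = 1)"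
    and U: "U \<in> carrier_mat Nt T"
    and "b0 \<ge> 0"
    and "\<And>q. 1 \<le> q \<Longrightarrow> q \<le> Q \<Longrightarrow> sigma2 q > 0"
    and "sigmaz2 > 0"
    and "rho > 0"
  defines "X \<equiv> Xi T Q g s U b0 sigma2 sigmaz2"
    and "Pd \<equiv> Pi_d Nm Q g"
    and "Pii \<equiv> Pi_i Nm b0 g"
  shows
    "(Pd \<noteq> 0\<^sub>m Nm Nm \<and> Lambda T Pd X \<ge> rho \<longrightarrow> mat_adjoint U *\<^sub>v conjugate (s 0) \<noteq> 0\<^sub>v T)
   \<and> (Pii \<noteq> 0\<^sub>m Nm Nm \<and> Lambda T Pii X \<ge> rho \<longrightarrow>
        (\<exists>q\<in>{1..Q}. mat_adjoint U *\<^sub>v conjugate (s q) \<noteq> 0\<^sub>v T))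
   \<and> (vec_space.rank Nt U = Nt \<and> b0 > 0 \<and> Re (quad Pd (g 0)) > 0 \<and>
        lambda_min (U * mat_adjoint U) \<ge> (rho * sigmaz2 / real Nt) / (b0 * Re (quad Pd (g 0)))
        \<longrightarrow> Lambda T Pd X \<ge> rho)
   \<and> (vec_space.rank Nt U = Nt \<and> Q \<ge> 1 \<and>
        Max ((\<lambda>q. sigma2 q * Re (quad Pii (g q))) ` {1..Q}) > 0 \<and>
        lambda_min (U * mat_adjoint U) \<ge>
          (rho * sigmaz2 / real Nt) / Max ((\<lambda>q. sigma2 q * Re (quad Pii (g q))) ` {1..Q})
        \<longrightarrow> Lambda T Pii X \<ge> rho)"
proof -
  have Tp: "T > 0" and Ntp: "Nt > 0" and Nmp: "Nm > 0" using assms(1-3) by auto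
  have gc: "g q \<in> carrier_vec Nm" if "q \<le> Q" for q using g[OF that] by blast
  have sc: "s q \<in> carrier_vec Nt" if "q \<le> Q" for q using s[OF that] by blast
  have su: "\<forall>i<Nt. cmod (s q $ i) = 1" if "q \<le> Q" for q using s[OF that] by blast
  have sig: "sigma2 q > 0" if "q \<in> {1..Q}" for q using assms(8) that by auto
  define u where "u = vec_stack U"
  define v where "v = (\<lambda>q. Gmat T (g q) (s q) *\<^sub>v u)"
  have vc: "v q \<in> carrier_vec (T*Nm)" if "q \<le> Q" for q
    unfolding v_def u_def by (rule G_carrier[OF gc[OF that] sc[OF that] U])
  define c where "c = (\<lambda>q. sigma2 q / sigmaz2)"
  have cpos: "c q > 0" if "q \<in> {1..Q}" for q unfolding c_def using sig[OF that] assms(9) by simp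
  have c0: "b0 / sigmaz2 \<ge> 0" using assms(7,9) by simp
  have dg: "dim_vec (g 0) = Nm" using gc[of 0] by simp
  have Xe: "X = mat (T*Nm) (T*Nm) (\<lambda>ij. complex_of_real (b0/sigmaz2) * outer (v 0) $$ ij
      + (\<Sum>q\<in>{1..Q}. complex_of_real (c q) * outer (v q) $$ ij))"
    unfolding X_def Xi_def Let_def v_def u_def c_def dg ..
  have RQ: "Re (quad X w) = (b0/sigmaz2) * (cmod (v 0 \<bullet>c w))\<^sup>2 + (\<Sum>q\<in>{1..Q}. c q * (cmod (v q \<bullet>c w))\<^sup>2)"
    if w: "w \<in> carrier_vec (T*Nm)" for w
    unfolding Xe by (rule ReQ[OF w vc[OF le0]]) (use vc in auto)
  define K where "K = (b0/sigmaz2) * nsq (v 0) + (\<Sum>q\<in>{1..Q}. c q * nsq (v q))"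
  have bd: "Re (quad X w) \<le> K * nsq w" if w: "w \<in> carrier_vec (T*Nm)" for w
    unfolding RQ[OF w] K_def by (rule QX_bound[OF w vc[OF le0] _ c0]) (use vc cpos in \<open>auto intro: less_imp_le\<close>)
  have t0: "(b0/sigmaz2) * (cmod (v 0 \<bullet>c w))\<^sup>2 \<le> Re (quad X w)" if w: "w \<in> carrier_vec (T*Nm)" for w
  proof -
    have "0 \<le> (\<Sum>q\<in>{1..Q}. c q * (cmod (v q \<bullet>c w))\<^sup>2)"
    proof (rule sum_nonneg)
      fix q assume q: "q \<in> {1..Q}"
      show "0 \<le> c q * (cmod (v q \<bullet>c w))\<^sup>2" using cpos[OF q] by simp
    qed
    thus ?thesis unfolding RQ[OF w] by simp
  qed
  have tq: "c q * (cmod (v q \<bullet>c w))\<^sup>2 \<le> Re (quad X w)" if w: "w \<in> carrier_vec (T*Nm)" and q: "q \<in> {1..Q}" for w q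
  proof -
    have "c q * (cmod (v q \<bullet>c w))\<^sup>2 \<le> (\<Sum>q\<in>{1..Q}. c q * (cmod (v q \<bullet>c w))\<^sup>2)"
    proof (rule member_le_sum[OF q])
      fix k assume k: "k \<in> {1..Q} - {q}"
      show "0 \<le> c k * (cmod (v k \<bullet>c w))\<^sup>2" using cpos[of k] k by simp
    qed simp
    moreover have "0 \<le> (b0/sigmaz2) * (cmod (v 0 \<bullet>c w))\<^sup>2" using c0 by (rule mult_nonneg_nonneg) simp
    ultimately show ?thesis unfolding RQ[OF w] by simp
  qed
  define Vd where "Vd = orth_compl Nm (g ` {1..Q})"
  have Pdp: "is_proj Nm Pd Vd" unfolding Pd_def Pi_d_def Vd_def
    by (rule orth_proj_is_proj) (use gc in auto)
  define Vi where "Vi = (if b0 > 0 then orth_compl Nm {g 0} else carrier_vec Nm)"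
  have Pip: "is_proj Nm Pii Vi"
  proof (cases "b0 > 0")
    case True
    thus ?thesis unfolding Pii_def Pi_i_def Vi_def using orth_proj_is_proj[of "{g 0}" Nm] gc[of 0] by simp
  next
    case False
    thus ?thesis unfolding Pii_def Pi_i_def Vi_def using is_proj_one by simp
  qed
  have Pdc: "Pd \<in> carrier_mat Nm Nm" using Pdp unfolding is_proj_def by blast
  have Pic: "Pii \<in> carrier_mat Nm Nm" using Pip unfolding is_proj_def by blast
  have orth_v: "v q \<bullet>c w = 0" if P: "is_proj Nm P V" and q: "q \<le> Q" and w: "w \<in> mat_range (kron (1\<^sub>m T) P)"
    and o: "\<And>y. y \<in> V \<Longrightarrow> y \<bullet>c g q = 0" for P V q w
  proof -
    have Pc: "P \<in> carrier_mat Nm Nm" using P unfolding is_proj_def by blast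
    have wc: "w \<in> carrier_vec (T*Nm)" by (rule kron_range(1)[OF Pc w])
    have "g q \<bullet>c blk Nm w t = 0" if t: "t < T" for t
    proof -
      have bV: "blk Nm w t \<in> V" using kron_range(2)[OF Pc w t] P unfolding is_proj_def by blast
      have "g q \<bullet>c blk Nm w t = cnj (blk Nm w t \<bullet>c g q)" by (rule sprodc_swap) (use gc[OF q] in simp)
      thus ?thesis using o[OF bV] by simp
    qed
    thus ?thesis unfolding v_def u_def G_sprod[OF gc[OF q] sc[OF q] U wc] by simp
  qed
  have cc_v: "v q \<bullet>c w = 0" if q: "q \<le> Q" and w: "w \<in> carrier_vec (T*Nm)"
    and z: "mat_adjoint U *\<^sub>v conjugate (s q) = 0\<^sub>v T" for q w
    unfolding v_def u_def G_sprod[OF gc[OF q] sc[OF q] U w] using adj_zero[OF U sc[OF q] z] by simp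
  have arith: "rho \<le> a / sigmaz2 * ga * L * real Nt"
    if "a * ga > 0" "L \<ge> (rho * sigmaz2 / real Nt) / (a * ga)" for a ga L
  proof -
    have "rho * sigmaz2 / real Nt \<le> L * (a * ga)" using that(2) by (simp only: pos_divide_le_eq[OF that(1)])
    hence "rho * sigmaz2 \<le> L * (a * ga) * real Nt" using Ntp by (simp add: divide_le_eq)
    hence "rho \<le> L * (a * ga) * real Nt / sigmaz2" using assms(9) by (simp add: le_divide_eq)
    thus ?thesis by (simp add: field_simps)
  qed
  show ?thesis
  proof (intro conjI)
    show "Pd \<noteq> 0\<^sub>m Nm Nm \<and> rho \<le> Lambda T Pd X \<longrightarrow> mat_adjoint U *\<^sub>v conjugate (s 0) \<noteq> 0\<^sub>v T"
    proof (intro impI notI)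
      assume h: "Pd \<noteq> 0\<^sub>m Nm Nm \<and> rho \<le> Lambda T Pd X" and z: "mat_adjoint U *\<^sub>v conjugate (s 0) = 0\<^sub>v T"
      have "Lambda T Pd X = 0"
      proof (rule Lambda_zero[OF Pdc _ Tp])
        show "Pd \<noteq> 0\<^sub>m Nm Nm" using h by blast
        fix w assume w: "w \<in> mat_range (kron (1\<^sub>m T) Pd)"
        have wc: "w \<in> carrier_vec (T*Nm)" by (rule kron_range(1)[OF Pdc w])
        have "v q \<bullet>c w = 0" if q: "q \<in> {1..Q}" for q
          by (rule orth_v[OF Pdp _ w]) (use q in \<open>auto simp: Vd_def orth_compl_def\<close>)
        thus "Re (quad X w) = 0" unfolding RQ[OF wc] using cc_v[OF _ wc z] by simp
      qed
      thus False using h assms(10) by simp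
    qed
    show "Pii \<noteq> 0\<^sub>m Nm Nm \<and> rho \<le> Lambda T Pii X \<longrightarrow>
        (\<exists>q\<in>{1..Q}. mat_adjoint U *\<^sub>v conjugate (s q) \<noteq> 0\<^sub>v T)"
    proof (intro impI)
      assume h: "Pii \<noteq> 0\<^sub>m Nm Nm \<and> rho \<le> Lambda T Pii X"
      show "\<exists>q\<in>{1..Q}. mat_adjoint U *\<^sub>v conjugate (s q) \<noteq> 0\<^sub>v T"
      proof (rule ccontr)
        assume "\<not> ?thesis"
        hence z: "mat_adjoint U *\<^sub>v conjugate (s q) = 0\<^sub>v T" if "q \<in> {1..Q}" for q using that by blast
        have "Lambda T Pii X = 0"
        proof (rule Lambda_zero[OF Pic _ Tp])
          show "Pii \<noteq> 0\<^sub>m Nm Nm" using h by blast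
          fix w assume w: "w \<in> mat_range (kron (1\<^sub>m T) Pii)"
          have wc: "w \<in> carrier_vec (T*Nm)" by (rule kron_range(1)[OF Pic w])
          have "v q \<bullet>c w = 0" if q: "q \<in> {1..Q}" for q
            by (rule cc_v[OF _ wc z[OF q]]) (use q in simp)
          moreover have "(b0/sigmaz2) * (cmod (v 0 \<bullet>c w))\<^sup>2 = 0"
          proof (cases "b0 > 0")
            case True
            have "v 0 \<bullet>c w = 0"
              by (rule orth_v[OF Pip _ w]) (use True in \<open>auto simp: Vi_def orth_compl_def\<close>)
            thus ?thesis by simp
          next
            case False
            hence "b0 = 0" using assms(7) by simp
            thus ?thesis by simp
          qed
          ultimately show "Re (quad X w) = 0" unfolding RQ[OF wc] by simp
        qed
        thus False using h assms(10) by simp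
      qed
    qed
    show "vec_space.rank Nt U = Nt \<and> b0 > 0 \<and> Re (quad Pd (g 0)) > 0 \<and>
        lambda_min (U * mat_adjoint U) \<ge> (rho * sigmaz2 / real Nt) / (b0 * Re (quad Pd (g 0)))
        \<longrightarrow> Lambda T Pd X \<ge> rho"
    proof (intro impI)
      assume h: "vec_space.rank Nt U = Nt \<and> b0 > 0 \<and> Re (quad Pd (g 0)) > 0 \<and>
        lambda_min (U * mat_adjoint U) \<ge> (rho * sigmaz2 / real Nt) / (b0 * Re (quad Pd (g 0)))"
      show "Lambda T Pd X \<ge> rho"
      proof (rule part_cd[OF Pdp gc[of 0] sc[of 0] su[of 0] U Ntp])
        show "b0 / sigmaz2 > 0" using h assms(9) by simp
        show "\<And>w. w \<in> carrier_vec (T*Nm) \<Longrightarrow>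
          b0 / sigmaz2 * (cmod ((Gmat T (g 0) (s 0) *\<^sub>v vec_stack U) \<bullet>c w))\<^sup>2 \<le> Re (quad X w)"
          using t0 unfolding v_def u_def by blast
        show "\<And>w. w \<in> carrier_vec (T*Nm) \<Longrightarrow> Re (quad X w) \<le> K * nsq w" by (rule bd)
        show "Re (quad Pd (g 0)) > 0" using h by blast
        show "rho \<le> b0 / sigmaz2 * Re (quad Pd (g 0)) * lambda_min (U * mat_adjoint U) * real Nt"
          by (rule arith) (use h in auto)
        show "rho > 0" by (rule assms(10))
      qed simp_all
    qed
    show "vec_space.rank Nt U = Nt \<and> Q \<ge> 1 \<and>
        Max ((\<lambda>q. sigma2 q * Re (quad Pii (g q))) ` {1..Q}) > 0 \<and>
        lambda_min (U * mat_adjoint U) \<ge>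
          (rho * sigmaz2 / real Nt) / Max ((\<lambda>q. sigma2 q * Re (quad Pii (g q))) ` {1..Q})
        \<longrightarrow> Lambda T Pii X \<ge> rho"
    proof (intro impI)
      let ?F = "\<lambda>q. sigma2 q * Re (quad Pii (g q))"
      assume h: "vec_space.rank Nt U = Nt \<and> Q \<ge> 1 \<and> Max (?F ` {1..Q}) > 0 \<and>
        lambda_min (U * mat_adjoint U) \<ge> (rho * sigmaz2 / real Nt) / Max (?F ` {1..Q})"
      have "Max (?F ` {1..Q}) \<in> ?F ` {1..Q}" by (rule Max_in) (use h in auto)
      then obtain q0 where q0: "q0 \<in> {1..Q}" "?F q0 = Max (?F ` {1..Q})" by auto
      have q0Q: "q0 \<le> Q" using q0 by simp
      have Fp: "sigma2 q0 * Re (quad Pii (g q0)) > 0" using q0 h by simp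
      have gp: "Re (quad Pii (g q0)) > 0" using Fp sig[OF q0(1)] by (simp add: zero_less_mult_iff)
      show "Lambda T Pii X \<ge> rho"
      proof (rule part_cd[OF Pip gc[OF q0Q] sc[OF q0Q] su[OF q0Q] U Ntp])
        show "c q0 > 0" by (rule cpos[OF q0(1)])
        show "\<And>w. w \<in> carrier_vec (T*Nm) \<Longrightarrow>
          c q0 * (cmod ((Gmat T (g q0) (s q0) *\<^sub>v vec_stack U) \<bullet>c w))\<^sup>2 \<le> Re (quad X w)"
          using tq[OF _ q0(1)] unfolding v_def u_def by blast
        show "\<And>w. w \<in> carrier_vec (T*Nm) \<Longrightarrow> Re (quad X w) \<le> K * nsq w" by (rule bd)
        show "Re (quad Pii (g q0)) > 0" by (rule gp)
        show "rho \<le> c q0 * Re (quad Pii (g q0)) * lambda_min (U * mat_adjoint U) * real Nt"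
          unfolding c_def by (rule arith) (use h q0 Fp in auto)
        show "rho > 0" by (rule assms(10))
      qed
    qed
  qed
qed

end
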